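(* Let $n$ be a positive integer, let $x,y,z$ be complex numbers with $x+y+z=1$, and let $t$ be a complex number with $t\notin\{0,1,\dots,n\}$. Then $$\frac{(-1)^n}2\sum_{k=0}^{n-1}\binom t{k}E_k(x)E_{n-1-k}(y)=\frac 1{n-t}\sum_{k=0}^n\binom {n-t}kB_k(x)E_{n-k}(z)+\binom tn\sum_{k=0}^n\binom nk\frac {E_{k}(z)}{t-k}B_{n-k}(y),$$ $$\frac n2\binom tn\sum_{k=0}^{n-1}\binom {n-1}k\frac {E_{k}(x)}{t-k}E_{n-1-k}(y)-(-1)^nE_n(z)\binom tn\sum_{k=0}^{n-1}\frac1{t-k}=(-1)^n\sum_{k=1}^n\binom t{n-k}\frac {B_k(y)}{k}E_{n-k}(z)-\sum_{k=1}^n\binom {n-1-t}{n-k}\frac {B_k(x)}kE_{n-k}(z),$$ and $$\frac {(-1)^{n-1}}n\binom {t-1}{n-1}\sum_{k=0}^n\binom nk\frac {B_k(x)}{t-k}B_{n-k}(y)-\frac {B_n(z)}n\binom {t-1}{n-1}\sum_{k=1}^{n-1}\frac1{t-k}=\frac 1t\sum_{k=1}^{n}\binom t{n-k}\frac{B_{k}(y)}kB_{n-k}(z)+\frac {(-1)^n}{n-t}\sum_{k=1}^n\binom {n-t}{n-k}\frac{B_k(x)}kB_{n-k}(z).$$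
   Context: Bernoulli numbers are defined by $B_0=1$ and $\sum_{k=0}^n\binom{n+1}kB_k=0$ for $n\ge1$; Euler numbers by $E_0=1$ and $\sum_{0\le k\le n,\,2\mid n-k}\binom nkE_k=0$ for $n\ge1$. The Bernoulli polynomials are $B_n(x)=\sum_{k=0}^n\binom nkB_kx^{n-k}$ and the Euler polynomials are $E_n(x)=\sum_{k=0}^n\binom nk\frac{E_k}{2^k}(x-\frac12)^{n-k}$. For complex $z$ and integer $k\ge0$, $\binom zk=z(z-1)\cdots(z-k+1)/k!$ (with $\binom z0=1$). *)

theory Defs
  imports Complex_Main
begin

fun bern :: "nat \<Rightarrow> complex" where
  "bern n = (if n = 0 then 1
     else - (\<Sum>k<n. of_nat ((n + 1) choose k) * bern k) / of_nat (n + 1))"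

fun euler :: "nat \<Rightarrow> complex" where
  "euler n = (if n = 0 then 1
     else - (\<Sum>k\<in>{k. k < n \<and> even (n - k)}. of_nat (n choose k) * euler k))"

definition bernpoly :: "nat \<Rightarrow> complex \<Rightarrow> complex" where
  "bernpoly n x = (\<Sum>k\<le>n. of_nat (n choose k) * bern k * x ^ (n - k))"

definition eulerpoly :: "nat \<Rightarrow> complex \<Rightarrow> complex" where
  "eulerpoly n x = (\<Sum>k\<le>n. of_nat (n choose k) * (euler k / 2 ^ k) * (x - 1/2) ^ (n - k))"

end

theory Submission
  imports Defs "HOL-Analysis.Analysis"
begin

declare bern.simps [simp del]
declare euler.simps [simp del]
lemma bern_0 [simp]: "bern 0 = 1" by (subst bern.simps) simp
lemma bern_1: "bern 1 = -1/2" by (subst bern.simps) (simp add: numeral_2_eq_2)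
lemma euler_0 [simp]: "euler 0 = 1" by (subst euler.simps) simp

lemma poly_sum_deriv:
  fixes a :: "nat \<Rightarrow> complex" and c :: complex
  shows "((\<lambda>x. \<Sum>k\<le>n. of_nat (n choose k) * a k * (x - c) ^ (n - k)) has_field_derivative
          of_nat n * (\<Sum>k\<le>n - 1. of_nat ((n - 1) choose k) * a k * (x - c) ^ (n - 1 - k))) (at x)"
proof -
  have h: "((\<lambda>x. x - c) has_field_derivative 1) (at x)"
    using DERIV_diff[OF DERIV_ident DERIV_const] by simp
  have "((\<lambda>x. \<Sum>k\<le>n. of_nat (n choose k) * a k * (x - c) ^ (n - k)) has_field_derivative
          (\<Sum>k\<le>n. of_nat (n choose k) * a k * (of_nat (n - k) * (1 * (x - c) ^ (n - k - Suc 0))))) (at x)"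
  proof (rule DERIV_sum)
    fix k
    show "((\<lambda>x. of_nat (n choose k) * a k * (x - c) ^ (n - k)) has_field_derivative
      of_nat (n choose k) * a k * (of_nat (n - k) * (1 * (x - c) ^ (n - k - Suc 0)))) (at x)"
      by (rule DERIV_cmult[OF DERIV_power[OF h, where n="n - k"]])
  qed
  moreover have "(\<Sum>k\<le>n. of_nat (n choose k) * a k * (of_nat (n - k) * (1 * (x - c) ^ (n - k - Suc 0))))
      = of_nat n * (\<Sum>k\<le>n - 1. of_nat ((n - 1) choose k) * a k * (x - c) ^ (n - 1 - k))"
  proof (cases n)
    case 0 then show ?thesis by simp
  next
    case (Suc m)
    have "(\<Sum>k\<le>n. of_nat (n choose k) * a k * (of_nat (n - k) * (1 * (x - c) ^ (n - k - Suc 0))))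
        = (\<Sum>k\<le>m. of_nat (n choose k) * a k * (of_nat (n - k) * (1 * (x - c) ^ (n - k - Suc 0))))"
      unfolding Suc sum.atMost_Suc by simp
    also have "\<dots> = (\<Sum>k\<le>m. of_nat n * (of_nat (m choose k) * a k * (x - c) ^ (m - k)))"
    proof (intro sum.cong refl)
      fix k assume k: "k \<in> {..m}"
      have "(n - k) * (n choose k) = n * ((n - 1) choose k)" by (rule binomial_absorb_comp)
      hence "of_nat (n choose k) * of_nat (n - k) = (of_nat n * of_nat (m choose k) :: complex)"
        unfolding Suc by (metis diff_Suc_1 mult.commute of_nat_mult)
      moreover have "n - k - Suc 0 = m - k" using Suc by simp
      ultimately show "of_nat (n choose k) * a k * (of_nat (n - k) * (1 * (x - c) ^ (n - k - Suc 0)))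
          = of_nat n * (of_nat (m choose k) * a k * (x - c) ^ (m - k))"
        by (simp add: mult_ac)
    qed
    also have "\<dots> = of_nat n * (\<Sum>k\<le>n - 1. of_nat ((n - 1) choose k) * a k * (x - c) ^ (n - 1 - k))"
      unfolding Suc by (simp add: sum_distrib_left)
    finally show ?thesis .
  qed
  ultimately show ?thesis by simp
qed

lemma bernpoly_deriv: "(bernpoly n has_field_derivative of_nat n * bernpoly (n - 1) x) (at x)"
  using poly_sum_deriv[where n=n and a=bern and x=x and c=0] unfolding bernpoly_def by simp

lemma eulerpoly_deriv: "(eulerpoly n has_field_derivative of_nat n * eulerpoly (n - 1) x) (at x)"
  using poly_sum_deriv[where n=n and a="\<lambda>k. euler k / 2 ^ k" and x=x and c="1/2"] unfolding eulerpoly_def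
  by (simp add: mult.assoc)

lemma bernpoly_0_left [simp]: "bernpoly 0 x = 1"
  by (simp add: bernpoly_def)

lemma eulerpoly_0_left [simp]: "eulerpoly 0 x = 1"
  by (simp add: eulerpoly_def)


lemma bern_rec: assumes "m \<ge> 1" shows "(\<Sum>k\<le>m. of_nat ((m + 1) choose k) * bern k) = 0"
proof -
  have "bern m = - (\<Sum>k<m. of_nat ((m + 1) choose k) * bern k) / of_nat (m + 1)"
    using assms bern.simps[of m] by simp
  hence "of_nat (m+1) * bern m = - (\<Sum>k<m. of_nat ((m + 1) choose k) * bern k)"
    by (simp add: field_simps del: of_nat_Suc)
  moreover have "(\<Sum>k\<le>m. of_nat ((m + 1) choose k) * bern k)
     = (\<Sum>k<m. of_nat ((m + 1) choose k) * bern k) + of_nat (m+1) * bern m"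
    by (simp add: lessThan_Suc_atMost[symmetric] del: of_nat_Suc)
  ultimately show ?thesis by simp
qed

lemma bernpoly_at_0: "bernpoly n 0 = bern n"
proof -
  have "bernpoly n 0 = (\<Sum>k\<le>n. if k = n then bern n else 0)"
    unfolding bernpoly_def by (intro sum.cong) auto
  thus ?thesis by simp
qed

lemma bernpoly_at_1: "bernpoly n 1 = bern n + (if n = 1 then 1 else 0)"
proof (cases "n \<ge> 2")
  case True
  then obtain m where m: "n = m + 1" "m \<ge> 1" by (metis add.commute le_add_diff_inverse2 one_le_numeral order.trans one_add_one add_le_cancel_right)
  have "bernpoly n 1 = (\<Sum>k\<le>n. of_nat (n choose k) * bern k)" by (simp add: bernpoly_def)
  also have "\<dots> = (\<Sum>k\<le>m. of_nat ((m+1) choose k) * bern k) + bern n"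
    using m by (simp del: of_nat_Suc)
  finally show ?thesis using bern_rec[OF m(2)] True by simp
next
  case False
  then consider "n = 0" | "n = 1" by linarith
  then show ?thesis by cases (auto simp: bernpoly_def bern_1)
qed

lemma euler_rec: assumes "n \<ge> 1"
  shows "(\<Sum>k\<in>{k. k \<le> n \<and> even (n - k)}. of_nat (n choose k) * euler k) = 0"
proof -
  have "{k. k \<le> n \<and> even (n - k)} = insert n {k. k < n \<and> even (n - k)}" by auto
  moreover have "euler n = - (\<Sum>k\<in>{k. k < n \<and> even (n - k)}. of_nat (n choose k) * euler k)"
    using assms euler.simps[of n] by simp
  ultimately show ?thesis by simp
qed

lemma eulerpoly_0_1: "eulerpoly n 0 + eulerpoly n 1 = (if n = 0 then 2 else 0)"
proof (cases "n = 0")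
  case True then show ?thesis by simp
next
  case False
  have "eulerpoly n 0 + eulerpoly n 1
      = (\<Sum>k\<le>n. of_nat (n choose k) * euler k * ((1 + (-1)^(n-k)) / 2^n))"
    unfolding eulerpoly_def sum.distrib[symmetric]
  proof (intro sum.cong refl)
    fix k assume "k \<in> {..n}"
    hence k: "k \<le> n" by simp
    have "(2::complex)^n = 2^k * 2^(n-k)" using k by (simp add: power_add[symmetric])
    moreover have "(0 - 1/2 :: complex)^(n-k) = (-1)^(n-k) / 2^(n-k)" by (simp add: power_divide[symmetric])
    moreover have "(1 - 1/2 :: complex)^(n-k) = 1 / 2^(n-k)" by (simp add: power_one_over)
    ultimately show "of_nat (n choose k) * (euler k / 2 ^ k) * (0 - 1 / 2) ^ (n - k) +
         of_nat (n choose k) * (euler k / 2 ^ k) * (1 - 1 / 2) ^ (n - k) =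
         of_nat (n choose k) * euler k * ((1 + (- 1) ^ (n - k)) / 2 ^ n)"
      by (simp add: field_simps)
  qed
  also have "\<dots> = (\<Sum>k\<le>n. if even (n - k) then of_nat (n choose k) * euler k * (2 / 2^n) else 0)"
    by (intro sum.cong refl) auto
  also have "\<dots> = (\<Sum>k\<in>{k. k \<le> n \<and> even (n - k)}. of_nat (n choose k) * euler k) * (2 / 2^n)"
  proof -
    have "{k. k \<le> n \<and> even (n - k)} = {k\<in>{..n}. even (n - k)}" by auto
    hence "(\<Sum>k\<in>{k. k \<le> n \<and> even (n - k)}. of_nat (n choose k) * euler k)
        = (\<Sum>k\<le>n. if even (n - k) then of_nat (n choose k) * euler k else 0)"
      by (simp only: sum.inter_filter[OF finite_atMost])
    thus ?thesis by (simp only: sum_distrib_right) (intro sum.cong refl, simp)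
  qed
  also have "\<dots> = 0" using euler_rec[of n] False by simp
  finally show ?thesis using False by simp
qed


definition conv :: "(nat \<Rightarrow> complex \<Rightarrow> complex) \<Rightarrow> (nat \<Rightarrow> complex \<Rightarrow> complex) \<Rightarrow> (nat \<Rightarrow> complex) \<Rightarrow> nat \<Rightarrow> complex \<Rightarrow> complex \<Rightarrow> complex" where
  "conv P Q c m u v = (\<Sum>k\<le>m. c k * P k u * Q (m - k) v)"

lemma conv_cong: "(\<And>k. k \<le> m \<Longrightarrow> c k = d k) \<Longrightarrow> conv P Q c m u v = conv P Q d m u v"
  unfolding conv_def by (intro sum.cong) auto

lemma conv_scale: "a * conv P Q c m u v = conv P Q (\<lambda>k. a * c k) m u v"
  unfolding conv_def by (simp add: sum_distrib_left mult.assoc)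

lemma conv_add: "conv P Q c m u v + conv P Q d m u v = conv P Q (\<lambda>k. c k + d k) m u v"
  unfolding conv_def by (simp add: sum.distrib[symmetric] algebra_simps)

lemma conv_diff: "conv P Q c m u v - conv P Q d m u v = conv P Q (\<lambda>k. c k - d k) m u v"
  unfolding conv_def by (simp add: sum_subtractf[symmetric] algebra_simps)

lemma conv_split0: "conv P Q c m u v = c 0 * P 0 u * Q m v + conv P Q (\<lambda>k. if k = 0 then 0 else c k) m u v"
  unfolding conv_def by (simp add: sum.atMost_shift)

lemma conv_zero: "(\<And>k. k \<le> m \<Longrightarrow> c k = 0) \<Longrightarrow> conv P Q c m u v = 0"
  unfolding conv_def by simp

definition appell :: "(nat \<Rightarrow> complex \<Rightarrow> complex) \<Rightarrow> bool" where
  "appell P \<longleftrightarrow> (\<forall>k x. (P k has_field_derivative of_nat k * P (k - 1) x) (at x))"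

lemma appell_bern: "appell bernpoly"
  unfolding appell_def using bernpoly_deriv by blast

lemma appell_euler: "appell eulerpoly"
  unfolding appell_def using eulerpoly_deriv by blast

lemma appell_line:
  assumes "appell P"
  shows "((\<lambda>s. P k (u + \<alpha> * s)) has_field_derivative \<alpha> * of_nat k * P (k - 1) (u + \<alpha> * s0)) (at s0)"
proof -
  have h1: "((\<lambda>s. u + \<alpha> * s) has_field_derivative \<alpha>) (at s0)"
    by (auto intro!: derivative_eq_intros)
  have h2: "(P k has_field_derivative of_nat k * P (k - 1) (u + \<alpha> * s0)) (at (u + \<alpha> * s0))"
    using assms unfolding appell_def by blast
  have "((\<lambda>s. P k (u + \<alpha> * s)) has_field_derivative of_nat k * P (k - 1) (u + \<alpha> * s0) * \<alpha>) (at s0)"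
    using DERIV_chain2[OF h2 h1] by simp
  thus ?thesis by (simp add: mult_ac)
qed

lemma conv_deriv:
  assumes P: "appell P" and Q: "appell Q" and m: "m \<ge> 1"
  shows "((\<lambda>s. conv P Q c m (u + \<alpha> * s) (v + \<beta> * s)) has_field_derivative
     conv P Q (\<lambda>j. \<alpha> * c (j + 1) * of_nat (j + 1) + \<beta> * c j * of_nat (m - j)) (m - 1)
       (u + \<alpha> * s0) (v + \<beta> * s0)) (at s0)"
proof -
  obtain m' where m': "m = Suc m'" using m by (cases m) auto
  define u' where "u' = u + \<alpha> * s0"
  define v' where "v' = v + \<beta> * s0"
  have "((\<lambda>s. conv P Q c m (u + \<alpha> * s) (v + \<beta> * s)) has_field_derivative
      (\<Sum>k\<le>m. c k * (\<alpha> * of_nat k * P (k - 1) u' * Q (m - k) v' +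
                        P k u' * (\<beta> * of_nat (m - k) * Q (m - k - 1) v')))) (at s0)"
    unfolding conv_def u'_def v'_def
  proof (rule DERIV_sum)
    fix k
    show "((\<lambda>s. c k * P k (u + \<alpha> * s) * Q (m - k) (v + \<beta> * s)) has_field_derivative
       c k * (\<alpha> * of_nat k * P (k - 1) (u + \<alpha> * s0) * Q (m - k) (v + \<beta> * s0) +
          P k (u + \<alpha> * s0) * (\<beta> * of_nat (m - k) * Q (m - k - 1) (v + \<beta> * s0)))) (at s0)"
      using DERIV_cmult[OF DERIV_mult[OF appell_line[OF P, of k u \<alpha> s0] appell_line[OF Q, of "m - k" v \<beta> s0]], of "c k"]
      by (simp add: mult_ac)
  qed
  moreover have "(\<Sum>k\<le>m. c k * (\<alpha> * of_nat k * P (k - 1) u' * Q (m - k) v' +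
                        P k u' * (\<beta> * of_nat (m - k) * Q (m - k - 1) v')))
     = conv P Q (\<lambda>j. \<alpha> * c (j + 1) * of_nat (j + 1) + \<beta> * c j * of_nat (m - j)) (m - 1) u' v'"
  proof -
    have A: "(\<Sum>k\<le>m. c k * (\<alpha> * of_nat k * P (k - 1) u' * Q (m - k) v'))
        = (\<Sum>j\<le>m'. \<alpha> * c (j + 1) * of_nat (j + 1) * P j u' * Q (m' - j) v')"
      unfolding m' sum.atMost_Suc_shift by (simp add: mult_ac)
    have B: "(\<Sum>k\<le>m. c k * (P k u' * (\<beta> * of_nat (m - k) * Q (m - k - 1) v')))
        = (\<Sum>j\<le>m'. \<beta> * c j * of_nat (m - j) * P j u' * Q (m' - j) v')"
      unfolding m' sum.atMost_Suc by (auto intro!: sum.cong simp: mult_ac Suc_diff_le)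
    show ?thesis
      unfolding conv_def distrib_left sum.distrib A B using m'
      by (simp add: sum.distrib[symmetric] algebra_simps)
  qed
  ultimately show ?thesis unfolding u'_def v'_def by simp
qed

lemma deriv_zero_eq:
  fixes f :: "complex \<Rightarrow> complex"
  assumes "\<And>s. (f has_field_derivative 0) (at s)"
  shows "f a = f b"
proof -
  have "\<exists>c. \<forall>x\<in>UNIV. f x = c"
    by (rule has_field_derivative_zero_constant) (use assms in auto)
  thus ?thesis by auto
qed

lemma deriv_const_diff:
  fixes f :: "complex \<Rightarrow> complex"
  assumes "\<And>s. (f has_field_derivative k) (at s)"
  shows "f b - f a = k * (b - a)"
proof -
  have d: "((\<lambda>s. f s - k * s) has_field_derivative 0) (at s)" for s
      using DERIV_diff[OF assms[of s] DERIV_cmult[OF DERIV_ident, of k]] by simp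
  have "f a - k * a = f b - k * b"
    using deriv_zero_eq[of "\<lambda>s. f s - k * s", OF d] by simp
  thus ?thesis by (simp add: algebra_simps)
qed

lemma bernpoly_refl: "bernpoly n (1 - x) = (-1)^n * bernpoly n x"
proof (induction n arbitrary: x)
  case 0 then show ?case by simp
next
  case (Suc n)
  define P where "P = (\<lambda>x. bernpoly (Suc n) (1 - x) - (-1)^(Suc n) * bernpoly (Suc n) x)"
  have dP: "(P has_field_derivative 0) (at s)" for s
  proof -
    have "(P has_field_derivative (- of_nat (Suc n) * bernpoly n (1 - s) - (-1)^(Suc n) * (of_nat (Suc n) * bernpoly n s))) (at s)"
      unfolding P_def
      using DERIV_diff[OF appell_line[OF appell_bern, of "Suc n" 1 "-1" s] DERIV_cmult[OF bernpoly_deriv[of "Suc n" s], of "(-1)^Suc n"]]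
      by simp
    moreover have "- of_nat (Suc n) * bernpoly n (1 - s) - (-1)^(Suc n) * (of_nat (Suc n) * bernpoly n s) = 0"
      using Suc.IH[of s] by (simp add: algebra_simps)
    ultimately show ?thesis by simp
  qed
  have Pc: "P x = P 0" for x using deriv_zero_eq[OF dP] by blast
  define R where "R = (\<lambda>x. bernpoly (Suc (Suc n)) (1 - x) - (-1)^(Suc (Suc n)) * bernpoly (Suc (Suc n)) x)"
  have dR: "(R has_field_derivative (- of_nat (Suc (Suc n)) * P 0)) (at s)" for s
  proof -
    have "(R has_field_derivative (- of_nat (Suc (Suc n)) * bernpoly (Suc n) (1 - s) - (-1)^(Suc (Suc n)) * (of_nat (Suc (Suc n)) * bernpoly (Suc n) s))) (at s)"
      unfolding R_def
      using DERIV_diff[OF appell_line[OF appell_bern, of "Suc (Suc n)" 1 "-1" s] DERIV_cmult[OF bernpoly_deriv[of "Suc (Suc n)" s], of "(-1)^Suc (Suc n)"]]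
      by simp
    moreover have "- of_nat (Suc (Suc n)) * bernpoly (Suc n) (1 - s) - (-1)^(Suc (Suc n)) * (of_nat (Suc (Suc n)) * bernpoly (Suc n) s) = - of_nat (Suc (Suc n)) * P s"
      unfolding P_def by (simp add: algebra_simps)
    ultimately show ?thesis using Pc[of s] by simp
  qed
  have "R 1 - R 0 = (- of_nat (Suc (Suc n)) * P 0) * (1 - 0)"
    by (rule deriv_const_diff[OF dR])
  moreover have "R 1 - R 0 = 0"
    unfolding R_def using bernpoly_at_1[of "Suc (Suc n)"] bernpoly_at_0[of "Suc (Suc n)"] by simp
  ultimately have "P 0 = 0" by (simp del: of_nat_Suc)
  hence "P x = 0" using Pc by simp
  thus ?case unfolding P_def right_minus_eq .
qed

lemma bern_odd: assumes "odd n" "n \<ge> 3" shows "bern n = 0"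
proof -
  have "bernpoly n 1 = - bernpoly n 0" using bernpoly_refl[of n 0] assms by simp
  moreover have "bernpoly n 1 = bernpoly n 0" using bernpoly_at_1[of n] bernpoly_at_0[of n] assms by simp
  ultimately show ?thesis using bernpoly_at_0[of n] by simp
qed

lemma eulerpoly_refl: "eulerpoly n (1 - x) = (-1)^n * eulerpoly n x"
proof (induction n arbitrary: x)
  case 0 then show ?case by simp
next
  case (Suc n)
  define P where "P = (\<lambda>x. eulerpoly (Suc n) (1 - x) - (-1)^(Suc n) * eulerpoly (Suc n) x)"
  have dP: "(P has_field_derivative 0) (at s)" for s
  proof -
    have "(P has_field_derivative (- of_nat (Suc n) * eulerpoly n (1 - s) - (-1)^(Suc n) * (of_nat (Suc n) * eulerpoly n s))) (at s)"
      unfolding P_def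
      using DERIV_diff[OF appell_line[OF appell_euler, of "Suc n" 1 "-1" s] DERIV_cmult[OF eulerpoly_deriv[of "Suc n" s], of "(-1)^Suc n"]]
      by simp
    moreover have "- of_nat (Suc n) * eulerpoly n (1 - s) - (-1)^(Suc n) * (of_nat (Suc n) * eulerpoly n s) = 0"
      using Suc.IH[of s] by (simp add: algebra_simps)
    ultimately show ?thesis by simp
  qed
  have Pc: "P x = P 0" for x using deriv_zero_eq[OF dP] by blast
  have "P 0 + P 1 = (1 - (-1)^Suc n) * (eulerpoly (Suc n) 0 + eulerpoly (Suc n) 1)"
    unfolding P_def by (simp add: algebra_simps)
  also have "\<dots> = 0" using eulerpoly_0_1[of "Suc n"] by simp
  finally have "P 0 = 0" using Pc[of 1] by simp
  hence "P x = 0" using Pc by simp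
  thus ?case unfolding P_def right_minus_eq .
qed

lemma euler0_even: assumes "even n" "n \<ge> 2" shows "eulerpoly n 0 = 0"
proof -
  have "eulerpoly n 1 = eulerpoly n 0" using eulerpoly_refl[of n 0] assms by simp
  thus ?thesis using eulerpoly_0_1[of n] assms by simp
qed


definition avoid :: "nat \<Rightarrow> complex \<Rightarrow> bool" where
  "avoid n t \<longleftrightarrow> (\<forall>j::nat. j \<le> n \<longrightarrow> t \<noteq> of_nat j)"

lemma avoid_ne: "avoid n t \<Longrightarrow> j \<le> n \<Longrightarrow> t - of_nat j \<noteq> 0"
  unfolding avoid_def by auto

lemma avoid_ne': "avoid n t \<Longrightarrow> j \<le> n \<Longrightarrow> of_nat j - t \<noteq> 0"
  unfolding avoid_def by auto

lemma avoid_pred1: "avoid n t \<Longrightarrow> n \<ge> 1 \<Longrightarrow> avoid (n - 1) (t - 1)"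
  unfolding avoid_def
proof (intro allI impI)
  fix j assume a: "\<forall>j. j \<le> n \<longrightarrow> t \<noteq> of_nat j" and n: "n \<ge> 1" and j: "j \<le> n - 1"
  have "j + 1 \<le> n" using j n by simp
  hence "t \<noteq> of_nat (j + 1)" using a by blast
  thus "t - 1 \<noteq> of_nat j" by (auto simp: algebra_simps)
qed

lemma avoid_pred2: "avoid n t \<Longrightarrow> avoid (n - 1) t"
  unfolding avoid_def by auto

lemma gb1: "of_nat (Suc k) * (a gchoose Suc k) = (a - of_nat k) * (a gchoose k)"
  for a :: complex
  by (simp only: gbinomial_absorption gbinomial_absorb_comp)

lemma gb2: "n \<ge> 1 \<Longrightarrow> of_nat n * (a gchoose n) = a * ((a - 1) gchoose (n - 1))"
  for a :: complex
  using gbinomial_absorption[of "n - 1" a] by simp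

lemma gb3: "n \<ge> 1 \<Longrightarrow> of_nat n * (a gchoose n) = (a - of_nat n + 1) * (a gchoose (n - 1))"
  for a :: complex
  using gb1[of "n - 1" a] by (simp add: of_nat_diff)

lemma nb1: "of_nat (Suc j) * of_nat (n choose Suc j) = (of_nat n * of_nat ((n - 1) choose j) :: complex)"
proof -
  have "Suc j * (n choose Suc j) = n * ((n - 1) choose j)"
  proof (cases n)
    case 0 then show ?thesis by simp
  next
    case (Suc m) then show ?thesis by (simp only: diff_Suc_1 Suc_times_binomial)
  qed
  thus ?thesis by (metis of_nat_mult)
qed

lemma nb2: "of_nat (n - j) * of_nat (n choose j) = (of_nat n * of_nat ((n - 1) choose j) :: complex)"
proof -
  have "(n - j) * (n choose j) = n * ((n - 1) choose j)"
    by (simp add: binomial_absorb_comp)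
  thus ?thesis by (metis of_nat_mult)
qed

definition L1c :: "nat \<Rightarrow> complex \<Rightarrow> nat \<Rightarrow> complex" where
  "L1c n t k = (-1)^n / 2 * (t gchoose k)"
definition F1c :: "nat \<Rightarrow> complex \<Rightarrow> nat \<Rightarrow> complex" where
  "F1c n t k = ((of_nat n - t) gchoose k) / (of_nat n - t)"
definition G1c :: "nat \<Rightarrow> complex \<Rightarrow> nat \<Rightarrow> complex" where
  "G1c n t k = (t gchoose n) * of_nat (n choose k) / (t - of_nat k)"

definition D1 :: "nat \<Rightarrow> complex \<Rightarrow> complex \<Rightarrow> complex \<Rightarrow> complex \<Rightarrow> complex" where
  "D1 n t x y z = conv eulerpoly eulerpoly (L1c n t) (n - 1) x y
     - conv bernpoly eulerpoly (F1c n t) n x z - conv eulerpoly bernpoly (G1c n t) n z y"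

lemma cL1_d1: "n \<ge> 1 \<Longrightarrow> L1c n t (j + 1) * of_nat (j + 1) = - t * L1c (n - 1) (t - 1) j"
proof -
  assume n: "n \<ge> 1"
  have p: "(-1::complex)^n = - ((-1)^(n-1))" using n by (cases n) auto
  have h: "(t gchoose (j + 1)) * of_nat (j + 1) = t * ((t - 1) gchoose j)"
    using gbinomial_absorption[of j t] by (simp only: mult.commute Suc_eq_plus1)
  have "L1c n t (j + 1) * of_nat (j + 1) = (-1)^n / 2 * ((t gchoose (j + 1)) * of_nat (j + 1))"
    unfolding L1c_def by (simp only: mult.assoc)
  also have "\<dots> = (-1)^n / 2 * (t * ((t - 1) gchoose j))" unfolding h ..
  also have "\<dots> = - t * L1c (n - 1) (t - 1) j" unfolding L1c_def p by (simp add: algebra_simps)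
  finally show ?thesis .
qed

lemma cF1_d1:
  assumes n: "n \<ge> 1" and j: "j \<le> n - 1" and t: "of_nat n - t \<noteq> 0"
  shows "F1c n t (j + 1) * of_nat (j + 1) - F1c n t j * of_nat (n - j) = - t * F1c (n - 1) (t - 1) j"
proof -
  define s where "s = of_nat n - t"
  have s0: "s \<noteq> 0" using t by (simp add: s_def)
  have s1: "of_nat (n - 1) - (t - 1) = s" using n by (simp add: s_def of_nat_diff)
  have g: "(s gchoose (j + 1)) * of_nat (j + 1) = (s - of_nat j) * (s gchoose j)"
    using gb1[of j s] by (simp only: mult.commute Suc_eq_plus1)
  have e1: "F1c n t (j + 1) * of_nat (j + 1) = (s - of_nat j) * (s gchoose j) / s"
    unfolding F1c_def s_def[symmetric] times_divide_eq_left g ..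
  have nj: "of_nat (n - j) = (of_nat n - of_nat j :: complex)" using j n by (simp add: of_nat_diff)
  have e2: "F1c n t j * of_nat (n - j) = (of_nat n - of_nat j) * (s gchoose j) / s"
    unfolding F1c_def s_def[symmetric] nj by (simp add: mult.commute)
  have e3: "F1c (n - 1) (t - 1) j = (s gchoose j) / s"
    unfolding F1c_def s1 ..
  have st: "s - of_nat n = - t" by (simp add: s_def)
  have "(s - of_nat j) * (s gchoose j) / s - (of_nat n - of_nat j) * (s gchoose j) / s
      = (s - of_nat n) * (s gchoose j) / s"
    by (simp add: diff_divide_distrib[symmetric] algebra_simps)
  thus ?thesis unfolding e1 e2 e3 st by simp
qed

lemma cG1_d1:
  assumes n: "n \<ge> 1" and j: "j \<le> n - 1"
  shows "- (G1c n t (j + 1) * of_nat (j + 1)) = - t * G1c (n - 1) (t - 1) j"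
proof -
  have a: "of_nat (j + 1) * of_nat (n choose (j + 1)) = (of_nat n * of_nat ((n - 1) choose j) :: complex)"
    using nb1[of j n] by simp
  have b: "of_nat n * (t gchoose n) = t * ((t - 1) gchoose (n - 1))" using gb2[OF n] .
  have c: "t - of_nat (j + 1) = t - 1 - of_nat j" by simp
  have "G1c n t (j + 1) * of_nat (j + 1) = (t gchoose n) * (of_nat (j + 1) * of_nat (n choose (j + 1))) / (t - of_nat (j + 1))"
    unfolding G1c_def by (simp add: field_simps)
  also have "\<dots> = (of_nat n * (t gchoose n)) * of_nat ((n - 1) choose j) / (t - 1 - of_nat j)"
    unfolding a c by (simp add: field_simps)
  also have "\<dots> = t * G1c (n - 1) (t - 1) j"
    unfolding b G1c_def by (simp add: field_simps)
  finally show ?thesis by simp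
qed

lemma cL1_d3:
  assumes n: "n \<ge> 1" and j: "j \<le> n - 1"
  shows "- (L1c n t (j + 1) * of_nat (j + 1)) + L1c n t j * of_nat (n - 1 - j) = - (of_nat n - 1 - t) * L1c (n - 1) t j"
proof -
  have p: "(-1::complex)^n = - ((-1)^(n-1))" using n by (cases n) auto
  have h: "(t gchoose (j + 1)) * of_nat (j + 1) = (t - of_nat j) * (t gchoose j)"
    using gb1[of j t] by (simp only: mult.commute Suc_eq_plus1)
  have nj: "of_nat (n - 1 - j) = (of_nat n - 1 - of_nat j :: complex)" using j n by (simp add: of_nat_diff)
  have "- (L1c n t (j + 1) * of_nat (j + 1)) + L1c n t j * of_nat (n - 1 - j)
     = (-1)^n / 2 * (- ((t gchoose (j + 1)) * of_nat (j + 1)) + (t gchoose j) * of_nat (n - 1 - j))"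
    unfolding L1c_def by (simp only: mult.assoc distrib_left mult_minus_right)
  also have "\<dots> = (-1)^n / 2 * (- ((t - of_nat j) * (t gchoose j)) + (t gchoose j) * (of_nat n - 1 - of_nat j))"
    unfolding h nj ..
  also have "\<dots> = - (of_nat n - 1 - t) * L1c (n - 1) t j"
    unfolding L1c_def p by (simp add: algebra_simps)
  finally show ?thesis .
qed

lemma cF1_d3:
  assumes n: "n \<ge> 1" and t1: "of_nat n - t \<noteq> 0" and t2: "of_nat n - 1 - t \<noteq> 0"
  shows "- (F1c n t (j + 1) * of_nat (j + 1)) = - (of_nat n - 1 - t) * F1c (n - 1) t j"
proof -
  define s where "s = of_nat n - t"
  have s1: "of_nat (n - 1) - t = s - 1" using n by (simp add: s_def of_nat_diff)
  have "((s gchoose (j + 1)) * of_nat (j + 1)) = s * ((s - 1) gchoose j)"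
    using gbinomial_absorption[of j s] by (simp add: mult.commute)
  hence "F1c n t (j + 1) * of_nat (j + 1) = (s - 1 gchoose j)"
    unfolding F1c_def s_def[symmetric] using t1 by (simp add: s_def field_simps)
  moreover have "(of_nat n - 1 - t) * F1c (n - 1) t j = (s - 1 gchoose j)"
    unfolding F1c_def s1 using t2 by (simp add: s_def field_simps)
  ultimately show ?thesis by (metis minus_mult_left)
qed

lemma cG1_d3:
  assumes n: "n \<ge> 1" and t: "t - of_nat j \<noteq> 0"
  shows "G1c n t j * of_nat (n - j) = - (of_nat n - 1 - t) * G1c (n - 1) t j"
proof -
  have "G1c n t j * of_nat (n - j) = (of_nat n * (t gchoose n)) * of_nat ((n - 1) choose j) / (t - of_nat j)"
    unfolding G1c_def using nb2[of n j] by (simp add: field_simps)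
  also have "\<dots> = (t - of_nat n + 1) * (t gchoose (n - 1)) * of_nat ((n - 1) choose j) / (t - of_nat j)"
    using gb3[OF n, of t] by simp
  also have "\<dots> = - (of_nat n - 1 - t) * G1c (n - 1) t j"
    unfolding G1c_def by (simp add: field_simps)
  finally show ?thesis .
qed


lemma D1_d1:
  assumes n: "n \<ge> 2" and av: "avoid n t"
  shows "((\<lambda>s. D1 n t (a + s) b (c - s)) has_field_derivative (- t * D1 (n - 1) (t - 1) (a + s0) b (c - s0))) (at s0)"
proof -
  define u where "u = a + 1 * s0"
  define v where "v = b + 0 * s0"
  define w where "w = c + (-1) * s0"
  have e: "(\<lambda>s. D1 n t (a + s) b (c - s)) = (\<lambda>s. conv eulerpoly eulerpoly (L1c n t) (n - 1) (a + 1 * s) (b + 0 * s)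
      - conv bernpoly eulerpoly (F1c n t) n (a + 1 * s) (c + (-1) * s)
      - conv eulerpoly bernpoly (G1c n t) n (c + (-1) * s) (b + 0 * s))"
    by (simp add: D1_def)
  have der: "((\<lambda>s. conv eulerpoly eulerpoly (L1c n t) (n - 1) (a + 1 * s) (b + 0 * s)
      - conv bernpoly eulerpoly (F1c n t) n (a + 1 * s) (c + (-1) * s)
      - conv eulerpoly bernpoly (G1c n t) n (c + (-1) * s) (b + 0 * s)) has_field_derivative
     conv eulerpoly eulerpoly (\<lambda>j. 1 * L1c n t (j + 1) * of_nat (j + 1) + 0 * L1c n t j * of_nat (n - 1 - j)) (n - 1 - 1) u v
     - conv bernpoly eulerpoly (\<lambda>j. 1 * F1c n t (j + 1) * of_nat (j + 1) + (-1) * F1c n t j * of_nat (n - j)) (n - 1) u w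
     - conv eulerpoly bernpoly (\<lambda>j. (-1) * G1c n t (j + 1) * of_nat (j + 1) + 0 * G1c n t j * of_nat (n - j)) (n - 1) w v) (at s0)"
    unfolding u_def v_def w_def using n
    by (intro DERIV_diff conv_deriv appell_bern appell_euler) auto
  have tn: "of_nat n - t \<noteq> 0" using avoid_ne'[OF av, of n] by simp
  have eq1: "conv eulerpoly eulerpoly (\<lambda>j. 1 * L1c n t (j + 1) * of_nat (j + 1) + 0 * L1c n t j * of_nat (n - 1 - j)) (n - 1 - 1) u v
     = conv eulerpoly eulerpoly (\<lambda>j. - t * L1c (n - 1) (t - 1) j) (n - 1 - 1) u v"
    using cL1_d1[of n t] n by (intro conv_cong) simp
  have eq2: "conv bernpoly eulerpoly (\<lambda>j. 1 * F1c n t (j + 1) * of_nat (j + 1) + (-1) * F1c n t j * of_nat (n - j)) (n - 1) u w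
     = conv bernpoly eulerpoly (\<lambda>j. - t * F1c (n - 1) (t - 1) j) (n - 1) u w"
  proof (intro conv_cong)
    fix j assume "j \<le> n - 1"
    thus "1 * F1c n t (j + 1) * of_nat (j + 1) + (-1) * F1c n t j * of_nat (n - j) = - t * F1c (n - 1) (t - 1) j"
      using cF1_d1[of n j t] n tn by simp
  qed
  have eq3: "conv eulerpoly bernpoly (\<lambda>j. (-1) * G1c n t (j + 1) * of_nat (j + 1) + 0 * G1c n t j * of_nat (n - j)) (n - 1) w v
     = conv eulerpoly bernpoly (\<lambda>j. - t * G1c (n - 1) (t - 1) j) (n - 1) w v"
  proof (intro conv_cong)
    fix j assume "j \<le> n - 1"
    thus "(-1) * G1c n t (j + 1) * of_nat (j + 1) + 0 * G1c n t j * of_nat (n - j) = - t * G1c (n - 1) (t - 1) j"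
      using cG1_d1[of n j t] n by simp
  qed
  have "- t * D1 (n - 1) (t - 1) u v w =
     conv eulerpoly eulerpoly (\<lambda>j. - t * L1c (n - 1) (t - 1) j) (n - 1 - 1) u v
     - conv bernpoly eulerpoly (\<lambda>j. - t * F1c (n - 1) (t - 1) j) (n - 1) u w
     - conv eulerpoly bernpoly (\<lambda>j. - t * G1c (n - 1) (t - 1) j) (n - 1) w v"
    unfolding D1_def right_diff_distrib conv_scale ..
  with der eq1 eq2 eq3 e have "((\<lambda>s. D1 n t (a + s) b (c - s)) has_field_derivative - t * D1 (n - 1) (t - 1) u v w) (at s0)"
    by simp
  thus ?thesis unfolding u_def v_def w_def by simp
qed

lemma D1_d3:
  assumes n: "n \<ge> 2" and av: "avoid n t"
  shows "((\<lambda>s. D1 n t (a - s) (b + s) c) has_field_derivative (- (of_nat n - 1 - t) * D1 (n - 1) t (a - s0) (b + s0) c)) (at s0)"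
proof -
  define u where "u = a + (-1) * s0"
  define v where "v = b + 1 * s0"
  define w where "w = c + 0 * s0"
  have e: "(\<lambda>s. D1 n t (a - s) (b + s) c) = (\<lambda>s. conv eulerpoly eulerpoly (L1c n t) (n - 1) (a + (-1) * s) (b + 1 * s)
      - conv bernpoly eulerpoly (F1c n t) n (a + (-1) * s) (c + 0 * s)
      - conv eulerpoly bernpoly (G1c n t) n (c + 0 * s) (b + 1 * s))"
    by (simp add: D1_def)
  have der: "((\<lambda>s. conv eulerpoly eulerpoly (L1c n t) (n - 1) (a + (-1) * s) (b + 1 * s)
      - conv bernpoly eulerpoly (F1c n t) n (a + (-1) * s) (c + 0 * s)
      - conv eulerpoly bernpoly (G1c n t) n (c + 0 * s) (b + 1 * s)) has_field_derivative
     conv eulerpoly eulerpoly (\<lambda>j. (-1) * L1c n t (j + 1) * of_nat (j + 1) + 1 * L1c n t j * of_nat (n - 1 - j)) (n - 1 - 1) u v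
     - conv bernpoly eulerpoly (\<lambda>j. (-1) * F1c n t (j + 1) * of_nat (j + 1) + 0 * F1c n t j * of_nat (n - j)) (n - 1) u w
     - conv eulerpoly bernpoly (\<lambda>j. 0 * G1c n t (j + 1) * of_nat (j + 1) + 1 * G1c n t j * of_nat (n - j)) (n - 1) w v) (at s0)"
    unfolding u_def v_def w_def using n
    by (intro DERIV_diff conv_deriv appell_bern appell_euler) auto
  have tn: "of_nat n - t \<noteq> 0" using avoid_ne'[OF av, of n] by simp
  have tn1: "of_nat n - 1 - t \<noteq> 0" using avoid_ne'[OF av, of "n - 1"] n by (simp add: of_nat_diff)
  have eq1: "conv eulerpoly eulerpoly (\<lambda>j. (-1) * L1c n t (j + 1) * of_nat (j + 1) + 1 * L1c n t j * of_nat (n - 1 - j)) (n - 1 - 1) u v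
     = conv eulerpoly eulerpoly (\<lambda>j. - (of_nat n - 1 - t) * L1c (n - 1) t j) (n - 1 - 1) u v"
  proof (intro conv_cong)
    fix j assume "j \<le> n - 1 - 1"
    thus "(-1) * L1c n t (j + 1) * of_nat (j + 1) + 1 * L1c n t j * of_nat (n - 1 - j) = - (of_nat n - 1 - t) * L1c (n - 1) t j"
      using cL1_d3[of n j t] n by simp
  qed
  have eq2: "conv bernpoly eulerpoly (\<lambda>j. (-1) * F1c n t (j + 1) * of_nat (j + 1) + 0 * F1c n t j * of_nat (n - j)) (n - 1) u w
     = conv bernpoly eulerpoly (\<lambda>j. - (of_nat n - 1 - t) * F1c (n - 1) t j) (n - 1) u w"
  proof (intro conv_cong)
    fix j assume "j \<le> n - 1"
    thus "(-1) * F1c n t (j + 1) * of_nat (j + 1) + 0 * F1c n t j * of_nat (n - j) = - (of_nat n - 1 - t) * F1c (n - 1) t j"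
      using cF1_d3[of n t j] n tn tn1 by simp
  qed
  have eq3: "conv eulerpoly bernpoly (\<lambda>j. 0 * G1c n t (j + 1) * of_nat (j + 1) + 1 * G1c n t j * of_nat (n - j)) (n - 1) w v
     = conv eulerpoly bernpoly (\<lambda>j. - (of_nat n - 1 - t) * G1c (n - 1) t j) (n - 1) w v"
  proof (intro conv_cong)
    fix j assume "j \<le> n - 1"
    thus "0 * G1c n t (j + 1) * of_nat (j + 1) + 1 * G1c n t j * of_nat (n - j) = - (of_nat n - 1 - t) * G1c (n - 1) t j"
      using cG1_d3[of n t j] n avoid_ne[OF av, of j] by simp
  qed
  have "- (of_nat n - 1 - t) * D1 (n - 1) t u v w =
     conv eulerpoly eulerpoly (\<lambda>j. - (of_nat n - 1 - t) * L1c (n - 1) t j) (n - 1 - 1) u v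
     - conv bernpoly eulerpoly (\<lambda>j. - (of_nat n - 1 - t) * F1c (n - 1) t j) (n - 1) u w
     - conv eulerpoly bernpoly (\<lambda>j. - (of_nat n - 1 - t) * G1c (n - 1) t j) (n - 1) w v"
    unfolding D1_def right_diff_distrib conv_scale ..
  with der eq1 eq2 eq3 e have "((\<lambda>s. D1 n t (a - s) (b + s) c) has_field_derivative - (of_nat n - 1 - t) * D1 (n - 1) t u v w) (at s0)"
    by simp
  thus ?thesis unfolding u_def v_def w_def by simp
qed


lemma euler_1: "euler 1 = 0"
proof -
  have "{k. k < (1::nat) \<and> even (1 - k)} = {}" by auto
  thus ?thesis by (subst euler.simps) simp
qed

lemma bern_Suc0: "bern (Suc 0) = -1/2" using bern_1 by simp
lemma euler_Suc0: "euler (Suc 0) = 0" using euler_1 by simp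

lemma bernpoly_1: "bernpoly 1 x = x - 1/2"
  by (simp add: bernpoly_def bern_Suc0)

lemma eulerpoly_1: "eulerpoly 1 x = x - 1/2"
  by (simp add: eulerpoly_def euler_Suc0)

lemma conv_E_eval: "conv eulerpoly Q c m 1 v + conv eulerpoly Q c m 0 v = 2 * c 0 * Q m v"
proof -
  have "conv eulerpoly Q c m 1 v + conv eulerpoly Q c m 0 v
      = (\<Sum>k\<le>m. c k * (eulerpoly k 0 + eulerpoly k 1) * Q (m - k) v)"
    unfolding conv_def sum.distrib[symmetric] by (intro sum.cong) (auto simp: algebra_simps)
  also have "\<dots> = (\<Sum>k\<le>m. if k = 0 then 2 * c 0 * Q m v else 0)"
    by (intro sum.cong) (auto simp: eulerpoly_0_1)
  finally show ?thesis by simp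
qed

lemma conv_BE_eval:
  assumes n: "n \<ge> 1"
  shows "conv bernpoly eulerpoly c n 1 0 + conv bernpoly eulerpoly c n 0 1 = c 1 * eulerpoly (n - 1) 0 + 2 * c n * bern n"
proof -
  have "conv bernpoly eulerpoly c n 1 0 + conv bernpoly eulerpoly c n 0 1
      = (\<Sum>k\<le>n. (if k = 1 then c 1 * eulerpoly (n - 1) 0 else 0) + (if k = n then 2 * c n * bern n else 0))"
    unfolding conv_def sum.distrib[symmetric]
  proof (intro sum.cong refl)
    fix k assume "k \<in> {..n}"
    have e1: "eulerpoly (n - k) 1 = (if n - k = 0 then 2 else 0) - eulerpoly (n - k) 0"
      using eulerpoly_0_1[of "n - k"] by (simp add: algebra_simps)
    show "c k * bernpoly k 1 * eulerpoly (n - k) 0 + c k * bernpoly k 0 * eulerpoly (n - k) 1 =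
         (if k = 1 then c 1 * eulerpoly (n - 1) 0 else 0) + (if k = n then 2 * c n * bern n else 0)"
      unfolding e1 bernpoly_at_1 bernpoly_at_0 using \<open>k \<in> {..n}\<close>
      by (auto simp: algebra_simps)
  qed
  also have "\<dots> = c 1 * eulerpoly (n - 1) 0 + 2 * c n * bern n"
    using n by (simp add: sum.distrib)
  finally show ?thesis .
qed

lemma binom_refl_ratio:
  assumes "t \<noteq> 0" "of_nat n - t \<noteq> 0"
  shows "((of_nat n - t) gchoose n) / (of_nat n - t) = - ((-1)^n * (t gchoose n) / t)"
proof -
  have a: "((of_nat n - t) gchoose n) = (-1)^n * ((t - 1) gchoose n)"
    using gbinomial_negated_upper[of "of_nat n - t" n] by simp
  have b: "(t - of_nat n) * (t gchoose n) = t * ((t - 1) gchoose n)"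
    by (rule gbinomial_absorb_comp)
  have c: "((t - 1) gchoose n) = (t - of_nat n) * (t gchoose n) / t"
    using b assms by (simp add: eq_divide_eq mult.commute)
  have d: "t - of_nat n = - (of_nat n - t)" by simp
  show ?thesis unfolding a c d using assms by (simp add: field_simps)
qed

lemma D1_eval:
  assumes n: "n \<ge> 1" and av: "avoid n t"
  shows "D1 n t 1 0 0 + D1 n t 0 0 1 = 0"
proof -
  have t0: "t \<noteq> 0" using avoid_ne[OF av, of 0] by simp
  have tn: "of_nat n - t \<noteq> 0" using avoid_ne'[OF av, of n] by simp
  have "D1 n t 1 0 0 + D1 n t 0 0 1 =
      (conv eulerpoly eulerpoly (L1c n t) (n - 1) 1 0 + conv eulerpoly eulerpoly (L1c n t) (n - 1) 0 0)
    - (conv bernpoly eulerpoly (F1c n t) n 1 0 + conv bernpoly eulerpoly (F1c n t) n 0 1)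
    - (conv eulerpoly bernpoly (G1c n t) n 1 0 + conv eulerpoly bernpoly (G1c n t) n 0 0)"
    unfolding D1_def by (simp add: algebra_simps)
  also have "\<dots> = 2 * L1c n t 0 * eulerpoly (n - 1) 0 - (F1c n t 1 * eulerpoly (n - 1) 0 + 2 * F1c n t n * bern n)
     - 2 * G1c n t 0 * bernpoly n 0"
    unfolding conv_E_eval conv_BE_eval[OF n] ..
  also have "\<dots> = ((-1)^n - 1) * eulerpoly (n - 1) 0 - 2 * bern n * (((of_nat n - t) gchoose n) / (of_nat n - t) + (t gchoose n) / t)"
    unfolding L1c_def F1c_def G1c_def bernpoly_at_0 using tn t0 by (simp add: field_simps)
  also have "\<dots> = ((-1)^n - 1) * eulerpoly (n - 1) 0 - 2 * bern n * ((1 - (-1)^n) * (t gchoose n) / t)"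
    unfolding binom_refl_ratio[OF t0 tn] using t0 by (simp add: field_simps)
  also have "\<dots> = 0"
  proof (cases "even n")
    case True then show ?thesis by simp
  next
    case False
    show ?thesis
    proof (cases "n = 1")
      case True then show ?thesis using t0 by (simp add: bern_Suc0)
    next
      case False
      hence "n \<ge> 3" using \<open>odd n\<close> n by presburger
      hence "eulerpoly (n - 1) 0 = 0" "bern n = 0"
        using euler0_even[of "n - 1"] bern_odd[of n] \<open>odd n\<close> by auto
      thus ?thesis by simp
    qed
  qed
  finally show ?thesis .
qed

lemma conv_0: "conv P Q c 0 u v = c 0 * P 0 u * Q 0 v"
  unfolding conv_def by simp

lemma conv_1: "conv P Q c 1 u v = c 0 * P 0 u * Q 1 v + c 1 * P 1 u * Q 0 v"
  unfolding conv_def by (simp add: numeral_2_eq_2)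

lemma D1_base:
  assumes av: "avoid 1 t" and s: "x + y + z = 1"
  shows "D1 1 t x y z = 0"
proof -
  have t0: "t \<noteq> 0" using avoid_ne[OF av, of 0] by simp
  have t1: "t - 1 \<noteq> 0" using avoid_ne[OF av, of 1] by simp
  have t1': "1 - t \<noteq> 0" using avoid_ne'[OF av, of 1] by simp
  have a: "conv eulerpoly eulerpoly (L1c 1 t) (1 - 1) x y = - 1/2"
    by (simp add: conv_0 L1c_def)
  have b: "conv bernpoly eulerpoly (F1c 1 t) 1 x z = (z - 1/2) / (1 - t) + (x - 1/2)"
    unfolding conv_1 F1c_def bernpoly_1 eulerpoly_1 using t1' by simp
  have b': "(z - 1/2) / (1 - t) = - ((z - 1/2) / (t - 1))"
    by (metis divide_minus_right minus_diff_eq)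
  have c: "conv eulerpoly bernpoly (G1c 1 t) 1 z y = (y - 1/2) + t * (z - 1/2) / (t - 1)"
    unfolding conv_1 G1c_def bernpoly_1 eulerpoly_1 using t0 by simp
  have "D1 1 t x y z = - 1/2 - ((z - 1/2) / (1 - t) + (x - 1/2)) - ((y - 1/2) + t * (z - 1/2) / (t - 1))"
    unfolding D1_def a b c ..
  also have "\<dots> = - 1/2 + (z - 1/2) / (t - 1) - (x - 1/2) - (y - 1/2) - t * (z - 1/2) / (t - 1)"
    unfolding b' by simp
  also have "\<dots> = - 1/2 - (x - 1/2) - (y - 1/2) + ((z - 1/2) - t * (z - 1/2)) / (t - 1)"
    by (simp add: diff_divide_distrib)
  also have "((z - 1/2) - t * (z - 1/2)) = - ((t - 1) * (z - 1/2))"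
    by (simp only: left_diff_distrib mult_1_left minus_diff_eq)
  also have "- ((t - 1) * (z - 1/2)) / (t - 1) = - (z - 1/2)" using t1 by simp
  also have "- 1/2 - (x - 1/2) - (y - 1/2) + - (z - 1/2) = 1 - x - y - z" by simp
  also have "\<dots> = (x + y + z) - x - y - z" unfolding s ..
  also have "\<dots> = 0" by simp
  finally show ?thesis .
qed

lemma D1_zero:
  assumes "n \<ge> 1" "avoid n t" "x + y + z = 1"
  shows "D1 n t x y z = 0"
  using assms
proof (induction n arbitrary: t x y z rule: nat_induct_at_least)
  case base
  then show ?case using D1_base by blast
next
  case (Suc n)
  define N where "N = Suc n"
  have N: "N \<ge> 2" using Suc.hyps N_def by simp
  have av: "avoid N t" using Suc.prems(1) N_def by simp
  have sxyz: "x + y + z = 1" using Suc.prems(2) .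
  have avn: "avoid n t" using avoid_pred2[OF av] N_def by simp
  have avn1: "avoid n (t - 1)" using avoid_pred1[OF av] N_def by simp
  have IH1: "D1 n t a b c = 0" if "a + b + c = 1" for a b c
    using Suc.IH[OF avn that] .
  have IH2: "D1 n (t - 1) a b c = 0" if "a + b + c = 1" for a b c
    using Suc.IH[OF avn1 that] .
  define f where "f = (\<lambda>s. D1 N t ((x + y) - s) (0 + s) z)"
  have df: "(f has_field_derivative 0) (at s)" for s
  proof -
    have "(f has_field_derivative (- (of_nat N - 1 - t) * D1 (N - 1) t ((x + y) - s) (0 + s) z)) (at s)"
      unfolding f_def by (rule D1_d3[OF N av])
    moreover have "((x + y) - s) + (0 + s) + z = 1" using sxyz by simp
    hence "D1 (N - 1) t ((x + y) - s) (0 + s) z = 0"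
      using IH1 N_def by simp
    ultimately show ?thesis by simp
  qed
  have A: "D1 N t x y z = D1 N t (x + y) 0 z"
    using deriv_zero_eq[OF df, of y 0] unfolding f_def by simp
  define g where "g = (\<lambda>s. D1 N t (0 + s) 0 (1 - s))"
  have dg: "(g has_field_derivative 0) (at s)" for s
  proof -
    have "(g has_field_derivative (- t * D1 (N - 1) (t - 1) (0 + s) 0 (1 - s))) (at s)"
      unfolding g_def by (rule D1_d1[OF N av])
    moreover have "(0 + s) + 0 + (1 - s) = 1" by simp
    hence "D1 (N - 1) (t - 1) (0 + s) 0 (1 - s) = 0"
      using IH2 N_def by simp
    ultimately show ?thesis by simp
  qed
  have z: "1 - (x + y) = z" using sxyz by (subst diff_eq_eq) (simp add: add_ac)
  have B: "D1 N t (x + y) 0 z = D1 N t 0 0 1"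
    using deriv_zero_eq[OF dg, of "x + y" 0] unfolding g_def z by simp
  have C: "D1 N t 1 0 0 = D1 N t 0 0 1"
    using deriv_zero_eq[OF dg, of 1 0] unfolding g_def by simp
  have "D1 N t 0 0 1 = 0" using D1_eval[of N t] N av C by simp
  thus ?case using A B N_def by simp
qed


lemma conv_delta0: "conv P Q (\<lambda>j. if j = 0 then a else 0) m u v = a * P 0 u * Q m v"
proof -
  have "conv P Q (\<lambda>j. if j = 0 then a else 0) m u v = (\<Sum>k\<le>m. if k = 0 then a * P 0 u * Q m v else 0)"
    unfolding conv_def by (intro sum.cong) auto
  thus ?thesis by (simp add: sum.delta)
qed

lemma conv_cong_delta:
  assumes "\<And>j. j \<le> m \<Longrightarrow> d j = c j + (if j = 0 then a else 0)"
  shows "conv P Q d m u v = conv P Q c m u v + a * P 0 u * Q m v"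
proof -
  have "conv P Q d m u v = conv P Q (\<lambda>j. c j + (if j = 0 then a else 0)) m u v"
    using assms by (rule conv_cong)
  also have "\<dots> = conv P Q c m u v + conv P Q (\<lambda>j. if j = 0 then a else 0) m u v"
    by (simp add: conv_add)
  finally show ?thesis by (simp add: conv_delta0)
qed

lemma hsum1: "n \<ge> 1 \<Longrightarrow> (\<Sum>k<n. 1 / (t - of_nat k)) = 1 / t + (\<Sum>k<n - 1. 1 / (t - 1 - of_nat k :: complex))"
proof -
  assume "n \<ge> 1"
  then obtain m where m: "n = Suc m" by (cases n) auto
  show ?thesis unfolding m sum.lessThan_Suc_shift by (simp add: algebra_simps)
qed

lemma hsum2: "(n::nat) \<ge> 1 \<Longrightarrow> (\<Sum>k<n. f k) = (\<Sum>k<n - 1. f k) + (f (n - 1) :: complex)"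
proof -
  assume "n \<ge> 1"
  then obtain m where m: "n = Suc m" by (cases n) auto
  show ?thesis unfolding m by simp
qed

definition A2c :: "nat \<Rightarrow> complex \<Rightarrow> nat \<Rightarrow> complex" where
  "A2c n t k = of_nat n / 2 * (t gchoose n) * of_nat ((n - 1) choose k) / (t - of_nat k)"
definition Hc2 :: "nat \<Rightarrow> complex \<Rightarrow> complex" where
  "Hc2 n t = (-1)^n * (t gchoose n) * (\<Sum>k<n. 1 / (t - of_nat k))"
definition R21c :: "nat \<Rightarrow> complex \<Rightarrow> nat \<Rightarrow> complex" where
  "R21c n t k = (-1)^n * (t gchoose (n - k)) / of_nat k"
definition R22c :: "nat \<Rightarrow> complex \<Rightarrow> nat \<Rightarrow> complex" where
  "R22c n t k = ((of_nat n - 1 - t) gchoose (n - k)) / of_nat k"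

definition D2 :: "nat \<Rightarrow> complex \<Rightarrow> complex \<Rightarrow> complex \<Rightarrow> complex \<Rightarrow> complex" where
  "D2 n t x y z = conv eulerpoly eulerpoly (A2c n t) (n - 1) x y - Hc2 n t * eulerpoly n z
     - conv bernpoly eulerpoly (R21c n t) n y z + conv bernpoly eulerpoly (R22c n t) n x z"

lemma neg1_pow_pred: "n \<ge> 1 \<Longrightarrow> (-1::complex)^n = - ((-1)^(n-1))"
  by (cases n) auto

lemma cA2_d1:
  assumes n: "n \<ge> 2" and j: "j \<le> n - 2"
  shows "A2c n t (j + 1) * of_nat (j + 1) = t * A2c (n - 1) (t - 1) j"
proof -
  have a: "of_nat (j + 1) * of_nat ((n - 1) choose (j + 1)) = (of_nat (n - 1) * of_nat ((n - 1 - 1) choose j) :: complex)"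
    using nb1[of j "n - 1"] by simp
  have b: "of_nat n * (t gchoose n) = t * ((t - 1) gchoose (n - 1))" using gb2[of n t] n by simp
  have "A2c n t (j + 1) * of_nat (j + 1) = (of_nat n * (t gchoose n)) * (of_nat (j + 1) * of_nat ((n - 1) choose (j + 1))) / 2 / (t - 1 - of_nat j)"
    unfolding A2c_def by (simp add: field_simps)
  also have "\<dots> = t * A2c (n - 1) (t - 1) j"
    unfolding a b A2c_def by (simp add: field_simps)
  finally show ?thesis .
qed

lemma cA2_d2:
  assumes n: "n \<ge> 2" and j: "j \<le> n - 2"
  shows "A2c n t j * of_nat (n - 1 - j) = (t - of_nat n + 1) * A2c (n - 1) t j"
proof -
  have a: "of_nat (n - 1 - j) * of_nat ((n - 1) choose j) = (of_nat (n - 1) * of_nat ((n - 1 - 1) choose j) :: complex)"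
    using nb2[of "n - 1" j] by simp
  have b: "of_nat n * (t gchoose n) = (t - of_nat n + 1) * (t gchoose (n - 1))" using gb3[of n t] n by simp
  have "A2c n t j * of_nat (n - 1 - j) = (of_nat n * (t gchoose n)) * (of_nat (n - 1 - j) * of_nat ((n - 1) choose j)) / 2 / (t - of_nat j)"
    unfolding A2c_def by (simp add: field_simps)
  also have "\<dots> = (t - of_nat n + 1) * A2c (n - 1) t j"
    unfolding a b A2c_def by (simp add: field_simps)
  finally show ?thesis .
qed

lemma cR21_d1:
  assumes n: "n \<ge> 1" and j: "j \<le> n - 1"
  shows "- (R21c n t j * of_nat (n - j)) = t * R21c (n - 1) (t - 1) j"
proof (cases "j = 0")
  case True then show ?thesis by (simp add: R21c_def)
next
  case False
  have b: "of_nat (n - j) * (t gchoose (n - j)) = t * ((t - 1) gchoose (n - 1 - j))"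
    using gb2[of "n - j" t] j n by (simp add: diff_diff_add add.commute)
  have "- (R21c n t j * of_nat (n - j)) = - ((-1)^n * (of_nat (n - j) * (t gchoose (n - j))) / of_nat j)"
    unfolding R21c_def by (simp add: field_simps)
  also have "\<dots> = t * R21c (n - 1) (t - 1) j"
    unfolding b R21c_def neg1_pow_pred[OF n] using False by (simp add: field_simps diff_diff_add add.commute)
  finally show ?thesis .
qed

lemma cR22_d1:
  assumes n: "n \<ge> 1" and j: "j \<le> n - 1"
  shows "R22c n t (j + 1) * of_nat (j + 1) - R22c n t j * of_nat (n - j)
      = t * R22c (n - 1) (t - 1) j + (if j = 0 then (-1)^(n - 1) * ((t - 1) gchoose (n - 1)) else 0)"
proof -
  define u where "u = of_nat n - 1 - t"
  have u1: "of_nat (n - 1) - 1 - (t - 1) = u" using n by (simp add: u_def of_nat_diff)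
  have e1: "R22c n t (j + 1) * of_nat (j + 1) = (u gchoose (n - 1 - j))"
    unfolding R22c_def u_def[symmetric] by (simp del: of_nat_Suc add: diff_diff_add add.commute)
  show ?thesis
  proof (cases "j = 0")
    case True
    have "(u gchoose (n - 1)) = (-1)^(n - 1) * ((t - 1) gchoose (n - 1))"
      using gbinomial_negated_upper[of u "n - 1"] n by (simp add: u_def of_nat_diff)
    thus ?thesis using True e1 by (simp add: R22c_def)
  next
    case False
    have g: "of_nat (n - j) * (u gchoose (n - j)) = (u - of_nat (n - 1 - j)) * (u gchoose (n - 1 - j))"
      using gb1[of "n - 1 - j" u] j n False by (simp add: Suc_diff_Suc)
    have h: "u - of_nat (n - 1 - j) = of_nat j - t" using j n False by (simp add: u_def of_nat_diff)
    have "R22c n t (j + 1) * of_nat (j + 1) - R22c n t j * of_nat (n - j)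
        = (u gchoose (n - 1 - j)) - (of_nat (n - j) * (u gchoose (n - j))) / of_nat j"
      unfolding e1 by (simp add: R22c_def u_def field_simps)
    also have "\<dots> = t * (u gchoose (n - 1 - j)) / of_nat j"
      unfolding g h using False by (simp add: field_simps)
    also have "\<dots> = t * R22c (n - 1) (t - 1) j"
      unfolding R22c_def u1 by (simp add: diff_diff_add add.commute)
    finally show ?thesis using False by simp
  qed
qed

lemma cR21_d2:
  assumes n: "n \<ge> 1" and j: "j \<le> n - 1"
  shows "R21c n t (j + 1) * of_nat (j + 1) - R21c n t j * of_nat (n - j)
      = (t - of_nat n + 1) * R21c (n - 1) t j + (if j = 0 then (-1)^n * (t gchoose (n - 1)) else 0)"
proof -
  have e1: "R21c n t (j + 1) * of_nat (j + 1) = (-1)^n * (t gchoose (n - 1 - j))"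
    unfolding R21c_def by (simp del: of_nat_Suc add: diff_diff_add add.commute)
  show ?thesis
  proof (cases "j = 0")
    case True
    thus ?thesis using e1 by (simp add: R21c_def)
  next
    case False
    have g: "of_nat (n - j) * (t gchoose (n - j)) = (t - of_nat (n - 1 - j)) * (t gchoose (n - 1 - j))"
      using gb1[of "n - 1 - j" t] j n False by (simp add: Suc_diff_Suc)
    have h: "t - of_nat (n - 1 - j) = t - of_nat n + 1 + of_nat j" using j n False by (simp add: of_nat_diff)
    have "R21c n t (j + 1) * of_nat (j + 1) - R21c n t j * of_nat (n - j)
        = (-1)^n * ((t gchoose (n - 1 - j)) - (of_nat (n - j) * (t gchoose (n - j))) / of_nat j)"
      unfolding e1 by (simp add: R21c_def field_simps)
    also have "\<dots> = (t - of_nat n + 1) * R21c (n - 1) t j"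
      unfolding g h R21c_def neg1_pow_pred[OF n] using False by (simp add: field_simps diff_diff_add add.commute)
    finally show ?thesis using False by simp
  qed
qed

lemma cR22_d2:
  assumes n: "n \<ge> 1" and j: "j \<le> n - 1"
  shows "- (R22c n t j * of_nat (n - j)) = (t - of_nat n + 1) * R22c (n - 1) t j"
proof (cases "j = 0")
  case True then show ?thesis by (simp add: R22c_def)
next
  case False
  define u where "u = of_nat n - 1 - t"
  have u1: "of_nat (n - 1) - 1 - t = u - 1" using n by (simp add: u_def of_nat_diff)
  have b: "of_nat (n - j) * (u gchoose (n - j)) = u * ((u - 1) gchoose (n - 1 - j))"
    using gb2[of "n - j" u] j n by (simp add: diff_diff_add add.commute)
  have "- (R22c n t j * of_nat (n - j)) = - ((of_nat (n - j) * (u gchoose (n - j))) / of_nat j)"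
    unfolding R22c_def u_def[symmetric] by (simp add: field_simps)
  also have "\<dots> = (t - of_nat n + 1) * R22c (n - 1) t j"
    unfolding b R22c_def u1 using False by (simp add: u_def field_simps diff_diff_add add.commute)
  finally show ?thesis .
qed

lemma cH2_d1:
  assumes n: "n \<ge> 1" and t: "t \<noteq> 0"
  shows "of_nat n * Hc2 n t + (-1)^(n - 1) * ((t - 1) gchoose (n - 1)) = - t * Hc2 (n - 1) (t - 1)"
proof -
  define S where "S = (\<Sum>k<n - 1. 1 / (t - 1 - of_nat k))"
  define b where "b = ((t - 1) gchoose (n - 1))"
  define p where "p = (-1::complex)^(n - 1)"
  have B: "of_nat n * (t gchoose n) = t * b" unfolding b_def using gb2[OF n] .
  have H1: "Hc2 n t = - p * (t gchoose n) * (1 / t + S)"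
    unfolding Hc2_def hsum1[OF n] neg1_pow_pred[OF n] p_def S_def by simp
  have H2: "Hc2 (n - 1) (t - 1) = p * b * S"
    unfolding Hc2_def p_def b_def S_def ..
  have "of_nat n * Hc2 n t + p * b = - p * (of_nat n * (t gchoose n)) * (1 / t + S) + p * b"
    unfolding H1 by (simp only: mult_ac)
  also have "\<dots> = - p * (t * b) * (1 / t + S) + p * b" unfolding B ..
  also have "\<dots> = - t * (p * b * S)" using t by (simp add: field_simps)
  finally show ?thesis unfolding H2 p_def b_def .
qed

lemma cH2_d2:
  assumes n: "n \<ge> 1" and t: "t - of_nat n + 1 \<noteq> 0"
  shows "of_nat n * Hc2 n t - (-1)^n * (t gchoose (n - 1)) = - (t - of_nat n + 1) * Hc2 (n - 1) t"
proof -
  define S where "S = (\<Sum>k<n - 1. 1 / (t - of_nat k))"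
  define b where "b = (t gchoose (n - 1))"
  define p where "p = (-1::complex)^n"
  define r where "r = t - of_nat n + 1"
  have B: "of_nat n * (t gchoose n) = r * b" unfolding b_def r_def using gb3[OF n] .
  have s: "(\<Sum>k<n. 1 / (t - of_nat k)) = S + 1 / r"
    using hsum2[OF n, of "\<lambda>k. 1 / (t - of_nat k)"] n unfolding S_def r_def
    by (simp add: of_nat_diff algebra_simps)
  have H1: "Hc2 n t = p * (t gchoose n) * (S + 1 / r)"
    unfolding Hc2_def s p_def ..
  have H2: "Hc2 (n - 1) t = - p * b * S"
    unfolding Hc2_def neg1_pow_pred[OF n] p_def b_def S_def by simp
  have "of_nat n * Hc2 n t - p * b = p * (of_nat n * (t gchoose n)) * (S + 1 / r) - p * b"
    unfolding H1 by (simp only: mult_ac)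
  also have "\<dots> = p * (r * b) * (S + 1 / r) - p * b" unfolding B ..
  also have "\<dots> = - r * (- p * b * S)" using t unfolding r_def[symmetric] by (simp add: field_simps)
  finally show ?thesis unfolding H2 p_def b_def r_def .
qed


lemma D2_d1:
  assumes n: "n \<ge> 2" and av: "avoid n t"
  shows "((\<lambda>s. D2 n t (a + s) b (c - s)) has_field_derivative (t * D2 (n - 1) (t - 1) (a + s0) b (c - s0))) (at s0)"
proof -
  define u where "u = a + 1 * s0"
  define v where "v = b + 0 * s0"
  define w where "w = c + (-1) * s0"
  have e: "(\<lambda>s. D2 n t (a + s) b (c - s)) = (\<lambda>s. conv eulerpoly eulerpoly (A2c n t) (n - 1) (a + 1 * s) (b + 0 * s)
      - Hc2 n t * eulerpoly n (c + (-1) * s)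
      - conv bernpoly eulerpoly (R21c n t) n (b + 0 * s) (c + (-1) * s)
      + conv bernpoly eulerpoly (R22c n t) n (a + 1 * s) (c + (-1) * s))"
    by (simp add: D2_def)
  have der: "((\<lambda>s. conv eulerpoly eulerpoly (A2c n t) (n - 1) (a + 1 * s) (b + 0 * s)
      - Hc2 n t * eulerpoly n (c + (-1) * s)
      - conv bernpoly eulerpoly (R21c n t) n (b + 0 * s) (c + (-1) * s)
      + conv bernpoly eulerpoly (R22c n t) n (a + 1 * s) (c + (-1) * s)) has_field_derivative
     conv eulerpoly eulerpoly (\<lambda>j. 1 * A2c n t (j + 1) * of_nat (j + 1) + 0 * A2c n t j * of_nat (n - 1 - j)) (n - 1 - 1) u v
     - Hc2 n t * ((-1) * of_nat n * eulerpoly (n - 1) w)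
     - conv bernpoly eulerpoly (\<lambda>j. 0 * R21c n t (j + 1) * of_nat (j + 1) + (-1) * R21c n t j * of_nat (n - j)) (n - 1) v w
     + conv bernpoly eulerpoly (\<lambda>j. 1 * R22c n t (j + 1) * of_nat (j + 1) + (-1) * R22c n t j * of_nat (n - j)) (n - 1) u w) (at s0)"
    unfolding u_def v_def w_def using n
    by (intro DERIV_diff DERIV_add DERIV_cmult conv_deriv appell_bern appell_euler appell_line) auto
  have t0: "t \<noteq> 0" using avoid_ne[OF av, of 0] by simp
  have eq1: "conv eulerpoly eulerpoly (\<lambda>j. 1 * A2c n t (j + 1) * of_nat (j + 1) + 0 * A2c n t j * of_nat (n - 1 - j)) (n - 1 - 1) u v
     = conv eulerpoly eulerpoly (\<lambda>j. t * A2c (n - 1) (t - 1) j) (n - 1 - 1) u v"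
  proof (intro conv_cong)
    fix j assume "j \<le> n - 1 - 1"
    thus "1 * A2c n t (j + 1) * of_nat (j + 1) + 0 * A2c n t j * of_nat (n - 1 - j) = t * A2c (n - 1) (t - 1) j"
      using cA2_d1[of n j t] n by simp
  qed
  have eq2: "conv bernpoly eulerpoly (\<lambda>j. 0 * R21c n t (j + 1) * of_nat (j + 1) + (-1) * R21c n t j * of_nat (n - j)) (n - 1) v w
     = conv bernpoly eulerpoly (\<lambda>j. t * R21c (n - 1) (t - 1) j) (n - 1) v w"
  proof (intro conv_cong)
    fix j assume "j \<le> n - 1"
    thus "0 * R21c n t (j + 1) * of_nat (j + 1) + (-1) * R21c n t j * of_nat (n - j) = t * R21c (n - 1) (t - 1) j"
      using cR21_d1[of n j t] n by simp
  qed
  have eq3: "conv bernpoly eulerpoly (\<lambda>j. 1 * R22c n t (j + 1) * of_nat (j + 1) + (-1) * R22c n t j * of_nat (n - j)) (n - 1) u w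
     = conv bernpoly eulerpoly (\<lambda>j. t * R22c (n - 1) (t - 1) j) (n - 1) u w
       + (-1)^(n - 1) * ((t - 1) gchoose (n - 1)) * bernpoly 0 u * eulerpoly (n - 1) w"
  proof (intro conv_cong_delta)
    fix j assume "j \<le> n - 1"
    thus "1 * R22c n t (j + 1) * of_nat (j + 1) + (-1) * R22c n t j * of_nat (n - j) =
      t * R22c (n - 1) (t - 1) j + (if j = 0 then (-1)^(n - 1) * ((t - 1) gchoose (n - 1)) else 0)"
      using cR22_d1[of n j t] n by simp
  qed
  have hh: "of_nat n * Hc2 n t + (-1)^(n - 1) * ((t - 1) gchoose (n - 1)) = - t * Hc2 (n - 1) (t - 1)"
    using cH2_d1[of n t] n t0 by simp
  have hh': "t * Hc2 (n - 1) (t - 1) = - (of_nat n * Hc2 n t + (-1)^(n - 1) * ((t - 1) gchoose (n - 1)))"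
    unfolding hh by simp
  have tgt: "t * D2 (n - 1) (t - 1) u v w =
     conv eulerpoly eulerpoly (\<lambda>j. t * A2c (n - 1) (t - 1) j) (n - 1 - 1) u v
     - t * Hc2 (n - 1) (t - 1) * eulerpoly (n - 1) w
     - conv bernpoly eulerpoly (\<lambda>j. t * R21c (n - 1) (t - 1) j) (n - 1) v w
     + conv bernpoly eulerpoly (\<lambda>j. t * R22c (n - 1) (t - 1) j) (n - 1) u w"
    unfolding D2_def right_diff_distrib distrib_left conv_scale by (simp add: mult.assoc)
  have "conv eulerpoly eulerpoly (\<lambda>j. 1 * A2c n t (j + 1) * of_nat (j + 1) + 0 * A2c n t j * of_nat (n - 1 - j)) (n - 1 - 1) u v
     - Hc2 n t * ((-1) * of_nat n * eulerpoly (n - 1) w)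
     - conv bernpoly eulerpoly (\<lambda>j. 0 * R21c n t (j + 1) * of_nat (j + 1) + (-1) * R21c n t j * of_nat (n - j)) (n - 1) v w
     + conv bernpoly eulerpoly (\<lambda>j. 1 * R22c n t (j + 1) * of_nat (j + 1) + (-1) * R22c n t j * of_nat (n - j)) (n - 1) u w
     = t * D2 (n - 1) (t - 1) u v w"
    unfolding tgt eq1 eq2 eq3 hh' by (simp add: algebra_simps)
  with der e have "((\<lambda>s. D2 n t (a + s) b (c - s)) has_field_derivative t * D2 (n - 1) (t - 1) u v w) (at s0)"
    by simp
  thus ?thesis unfolding u_def v_def w_def by simp
qed

lemma D2_d2:
  assumes n: "n \<ge> 2" and av: "avoid n t"
  shows "((\<lambda>s. D2 n t a (b + s) (c - s)) has_field_derivative ((t - of_nat n + 1) * D2 (n - 1) t a (b + s0) (c - s0))) (at s0)"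
proof -
  define u where "u = a + 0 * s0"
  define v where "v = b + 1 * s0"
  define w where "w = c + (-1) * s0"
  have e: "(\<lambda>s. D2 n t a (b + s) (c - s)) = (\<lambda>s. conv eulerpoly eulerpoly (A2c n t) (n - 1) (a + 0 * s) (b + 1 * s)
      - Hc2 n t * eulerpoly n (c + (-1) * s)
      - conv bernpoly eulerpoly (R21c n t) n (b + 1 * s) (c + (-1) * s)
      + conv bernpoly eulerpoly (R22c n t) n (a + 0 * s) (c + (-1) * s))"
    by (simp add: D2_def)
  have der: "((\<lambda>s. conv eulerpoly eulerpoly (A2c n t) (n - 1) (a + 0 * s) (b + 1 * s)
      - Hc2 n t * eulerpoly n (c + (-1) * s)
      - conv bernpoly eulerpoly (R21c n t) n (b + 1 * s) (c + (-1) * s)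
      + conv bernpoly eulerpoly (R22c n t) n (a + 0 * s) (c + (-1) * s)) has_field_derivative
     conv eulerpoly eulerpoly (\<lambda>j. 0 * A2c n t (j + 1) * of_nat (j + 1) + 1 * A2c n t j * of_nat (n - 1 - j)) (n - 1 - 1) u v
     - Hc2 n t * ((-1) * of_nat n * eulerpoly (n - 1) w)
     - conv bernpoly eulerpoly (\<lambda>j. 1 * R21c n t (j + 1) * of_nat (j + 1) + (-1) * R21c n t j * of_nat (n - j)) (n - 1) v w
     + conv bernpoly eulerpoly (\<lambda>j. 0 * R22c n t (j + 1) * of_nat (j + 1) + (-1) * R22c n t j * of_nat (n - j)) (n - 1) u w) (at s0)"
    unfolding u_def v_def w_def using n
    by (intro DERIV_diff DERIV_add DERIV_cmult conv_deriv appell_bern appell_euler appell_line) auto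
  have tn1: "t - of_nat n + 1 \<noteq> 0"
    using avoid_ne[OF av, of "n - 1"] n by (simp add: of_nat_diff algebra_simps)
  have eq1: "conv eulerpoly eulerpoly (\<lambda>j. 0 * A2c n t (j + 1) * of_nat (j + 1) + 1 * A2c n t j * of_nat (n - 1 - j)) (n - 1 - 1) u v
     = conv eulerpoly eulerpoly (\<lambda>j. (t - of_nat n + 1) * A2c (n - 1) t j) (n - 1 - 1) u v"
  proof (intro conv_cong)
    fix j assume "j \<le> n - 1 - 1"
    thus "0 * A2c n t (j + 1) * of_nat (j + 1) + 1 * A2c n t j * of_nat (n - 1 - j) = (t - of_nat n + 1) * A2c (n - 1) t j"
      using cA2_d2[of n j t] n by simp
  qed
  have eq2: "conv bernpoly eulerpoly (\<lambda>j. 1 * R21c n t (j + 1) * of_nat (j + 1) + (-1) * R21c n t j * of_nat (n - j)) (n - 1) v w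
     = conv bernpoly eulerpoly (\<lambda>j. (t - of_nat n + 1) * R21c (n - 1) t j) (n - 1) v w
       + (-1)^n * (t gchoose (n - 1)) * bernpoly 0 v * eulerpoly (n - 1) w"
  proof (intro conv_cong_delta)
    fix j assume "j \<le> n - 1"
    thus "1 * R21c n t (j + 1) * of_nat (j + 1) + (-1) * R21c n t j * of_nat (n - j) =
      (t - of_nat n + 1) * R21c (n - 1) t j + (if j = 0 then (-1)^n * (t gchoose (n - 1)) else 0)"
      using cR21_d2[of n j t] n by simp
  qed
  have eq3: "conv bernpoly eulerpoly (\<lambda>j. 0 * R22c n t (j + 1) * of_nat (j + 1) + (-1) * R22c n t j * of_nat (n - j)) (n - 1) u w
     = conv bernpoly eulerpoly (\<lambda>j. (t - of_nat n + 1) * R22c (n - 1) t j) (n - 1) u w"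
  proof (intro conv_cong)
    fix j assume "j \<le> n - 1"
    thus "0 * R22c n t (j + 1) * of_nat (j + 1) + (-1) * R22c n t j * of_nat (n - j) = (t - of_nat n + 1) * R22c (n - 1) t j"
      using cR22_d2[of n j t] n by simp
  qed
  have hh: "of_nat n * Hc2 n t - (-1)^n * (t gchoose (n - 1)) = - (t - of_nat n + 1) * Hc2 (n - 1) t"
    using cH2_d2[of n t] n tn1 by simp
  have hh': "(t - of_nat n + 1) * Hc2 (n - 1) t = - (of_nat n * Hc2 n t - (-1)^n * (t gchoose (n - 1)))"
    unfolding hh by (simp only: minus_mult_left minus_minus)
  have tgt: "(t - of_nat n + 1) * D2 (n - 1) t u v w =
     conv eulerpoly eulerpoly (\<lambda>j. (t - of_nat n + 1) * A2c (n - 1) t j) (n - 1 - 1) u v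
     - (t - of_nat n + 1) * Hc2 (n - 1) t * eulerpoly (n - 1) w
     - conv bernpoly eulerpoly (\<lambda>j. (t - of_nat n + 1) * R21c (n - 1) t j) (n - 1) v w
     + conv bernpoly eulerpoly (\<lambda>j. (t - of_nat n + 1) * R22c (n - 1) t j) (n - 1) u w"
    unfolding D2_def right_diff_distrib distrib_left conv_scale by (simp add: mult.assoc)
  have "conv eulerpoly eulerpoly (\<lambda>j. 0 * A2c n t (j + 1) * of_nat (j + 1) + 1 * A2c n t j * of_nat (n - 1 - j)) (n - 1 - 1) u v
     - Hc2 n t * ((-1) * of_nat n * eulerpoly (n - 1) w)
     - conv bernpoly eulerpoly (\<lambda>j. 1 * R21c n t (j + 1) * of_nat (j + 1) + (-1) * R21c n t j * of_nat (n - j)) (n - 1) v w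
     + conv bernpoly eulerpoly (\<lambda>j. 0 * R22c n t (j + 1) * of_nat (j + 1) + (-1) * R22c n t j * of_nat (n - j)) (n - 1) u w
     = (t - of_nat n + 1) * D2 (n - 1) t u v w"
    unfolding tgt eq1 eq2 eq3 hh' by (simp add: algebra_simps)
  with der e have "((\<lambda>s. D2 n t a (b + s) (c - s)) has_field_derivative (t - of_nat n + 1) * D2 (n - 1) t u v w) (at s0)"
    by simp
  thus ?thesis unfolding u_def v_def w_def by simp
qed


lemma conv_QE_eval: "conv P eulerpoly c m u 0 + conv P eulerpoly c m u 1 = 2 * c m * P m u"
proof -
  have "conv P eulerpoly c m u 0 + conv P eulerpoly c m u 1
      = (\<Sum>k\<le>m. c k * P k u * (eulerpoly (m - k) 0 + eulerpoly (m - k) 1))"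
    unfolding conv_def sum.distrib[symmetric] by (intro sum.cong) (auto simp: algebra_simps)
  also have "\<dots> = (\<Sum>k\<le>m. if k = m then 2 * c m * P m u else 0)"
    by (intro sum.cong) (auto simp: eulerpoly_0_1)
  finally show ?thesis by simp
qed

lemma D2_base:
  assumes av: "avoid 1 t" and s: "x + y + z = 1"
  shows "D2 1 t x y z = 0"
proof -
  have t0: "t \<noteq> 0" using avoid_ne[OF av, of 0] by simp
  have a: "conv eulerpoly eulerpoly (A2c 1 t) (1 - 1) x y = 1/2"
    using t0 by (simp add: conv_0 A2c_def)
  have h: "Hc2 1 t = -1" using t0 by (simp add: Hc2_def)
  have b: "conv bernpoly eulerpoly (R21c 1 t) 1 y z = - (y - 1/2)"
    unfolding conv_1 R21c_def bernpoly_1 by simp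
  have c: "conv bernpoly eulerpoly (R22c 1 t) 1 x z = x - 1/2"
    unfolding conv_1 R22c_def bernpoly_1 by simp
  have "D2 1 t x y z = 1/2 - (-1) * (z - 1/2) - (- (y - 1/2)) + (x - 1/2)"
    unfolding D2_def a h b c eulerpoly_1 ..
  also have "\<dots> = (x + y + z) - 1" by simp
  also have "\<dots> = 0" unfolding s by simp
  finally show ?thesis .
qed

lemma D2_eval:
  assumes n: "n \<ge> 1" and av: "avoid n t"
  shows "D2 n t 1 0 0 + D2 n t 0 0 1 = 0"
proof -
  have t0: "t \<noteq> 0" using avoid_ne[OF av, of 0] by simp
  define b where "b = ((t - 1) gchoose (n - 1))"
  define E where "E = eulerpoly (n - 1) 0"
  have "D2 n t 1 0 0 + D2 n t 0 0 1 =
      (conv eulerpoly eulerpoly (A2c n t) (n - 1) 1 0 + conv eulerpoly eulerpoly (A2c n t) (n - 1) 0 0)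
    - Hc2 n t * (eulerpoly n 0 + eulerpoly n 1)
    - (conv bernpoly eulerpoly (R21c n t) n 0 0 + conv bernpoly eulerpoly (R21c n t) n 0 1)
    + (conv bernpoly eulerpoly (R22c n t) n 1 0 + conv bernpoly eulerpoly (R22c n t) n 0 1)"
    unfolding D2_def by (simp add: algebra_simps)
  also have "\<dots> = 2 * A2c n t 0 * E - 2 * R21c n t n * bern n + (R22c n t 1 * E + 2 * R22c n t n * bern n)"
    unfolding conv_E_eval conv_QE_eval conv_BE_eval[OF n] eulerpoly_0_1 E_def bernpoly_at_0 using n by simp
  also have "2 * A2c n t 0 = b"
    unfolding A2c_def b_def using gb2[OF n, of t] t0 by (simp add: field_simps)
  also have "R22c n t 1 = (-1)^(n - 1) * b"
    unfolding R22c_def b_def using gbinomial_negated_upper[of "of_nat n - 1 - t" "n - 1"] n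
    by (simp add: of_nat_diff)
  also have "2 * R21c n t n = 2 * (-1)^n / of_nat n" unfolding R21c_def by simp
  also have "2 * R22c n t n = 2 / of_nat n" unfolding R22c_def by simp
  finally have X: "D2 n t 1 0 0 + D2 n t 0 0 1 = b * E * (1 + (-1)^(n - 1)) + 2 * bern n / of_nat n * (1 - (-1)^n)"
    by (simp add: algebra_simps diff_divide_distrib)
  show ?thesis
  proof (cases "even n")
    case True
    hence "(-1::complex)^(n - 1) = -1" using n by (simp add: neg1_pow_pred[OF n])
    thus ?thesis unfolding X using True by simp
  next
    case False
    show ?thesis
    proof (cases "n = 1")
      case True then show ?thesis unfolding X b_def E_def by (simp add: bern_Suc0)
    next
      case False
      hence "n \<ge> 3" using \<open>odd n\<close> n by presburger
      hence "E = 0" "bern n = 0"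
        unfolding E_def using euler0_even[of "n - 1"] bern_odd[of n] \<open>odd n\<close> by auto
      thus ?thesis unfolding X by simp
    qed
  qed
qed

lemma D2_zero:
  assumes "n \<ge> 1" "avoid n t" "x + y + z = 1"
  shows "D2 n t x y z = 0"
  using assms
proof (induction n arbitrary: t x y z rule: nat_induct_at_least)
  case base
  then show ?case using D2_base by blast
next
  case (Suc n)
  define N where "N = Suc n"
  have N: "N \<ge> 2" using Suc.hyps N_def by simp
  have av: "avoid N t" using Suc.prems(1) N_def by simp
  have sxyz: "x + y + z = 1" using Suc.prems(2) .
  have avn: "avoid n t" using avoid_pred2[OF av] N_def by simp
  have avn1: "avoid n (t - 1)" using avoid_pred1[OF av] N_def by simp
  have IH1: "D2 n t a b c = 0" if "a + b + c = 1" for a b c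
    using Suc.IH[OF avn that] .
  have IH2: "D2 n (t - 1) a b c = 0" if "a + b + c = 1" for a b c
    using Suc.IH[OF avn1 that] .
  define f where "f = (\<lambda>s. D2 N t x (0 + s) ((y + z) - s))"
  have df: "(f has_field_derivative 0) (at s)" for s
  proof -
    have "(f has_field_derivative ((t - of_nat N + 1) * D2 (N - 1) t x (0 + s) ((y + z) - s))) (at s)"
      unfolding f_def by (rule D2_d2[OF N av])
    moreover have "x + (0 + s) + ((y + z) - s) = 1" using sxyz by (simp add: add_ac)
    hence "D2 (N - 1) t x (0 + s) ((y + z) - s) = 0"
      using IH1 N_def by simp
    ultimately show ?thesis by simp
  qed
  have A: "D2 N t x y z = D2 N t x 0 (y + z)"
    using deriv_zero_eq[OF df, of y 0] unfolding f_def by simp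
  define g where "g = (\<lambda>s. D2 N t (0 + s) 0 (1 - s))"
  have dg: "(g has_field_derivative 0) (at s)" for s
  proof -
    have "(g has_field_derivative (t * D2 (N - 1) (t - 1) (0 + s) 0 (1 - s))) (at s)"
      unfolding g_def by (rule D2_d1[OF N av])
    moreover have "(0 + s) + 0 + (1 - s) = 1" by simp
    hence "D2 (N - 1) (t - 1) (0 + s) 0 (1 - s) = 0"
      using IH2 N_def by simp
    ultimately show ?thesis by simp
  qed
  have z: "1 - x = y + z" using sxyz by (subst diff_eq_eq) (simp add: add_ac)
  have B: "D2 N t x 0 (y + z) = D2 N t 0 0 1"
    using deriv_zero_eq[OF dg, of x 0] unfolding g_def z by simp
  have C: "D2 N t 1 0 0 = D2 N t 0 0 1"
    using deriv_zero_eq[OF dg, of 1 0] unfolding g_def by simp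
  have "D2 N t 0 0 1 = 0" using D2_eval[of N t] N av C by simp
  thus ?case using A B N_def by simp
qed


definition A3c :: "nat \<Rightarrow> complex \<Rightarrow> nat \<Rightarrow> complex" where
  "A3c n t k = (-1)^(n - 1) / of_nat n * ((t - 1) gchoose (n - 1)) * of_nat (n choose k) / (t - of_nat k)"
definition Hc3 :: "nat \<Rightarrow> complex \<Rightarrow> complex" where
  "Hc3 n t = 1 / of_nat n * ((t - 1) gchoose (n - 1)) * (\<Sum>k=1..<n. 1 / (t - of_nat k))"
definition R31c :: "nat \<Rightarrow> complex \<Rightarrow> nat \<Rightarrow> complex" where
  "R31c n t k = 1 / t * (t gchoose (n - k)) / of_nat k"
definition R32c :: "nat \<Rightarrow> complex \<Rightarrow> nat \<Rightarrow> complex" where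
  "R32c n t k = (-1)^n / (of_nat n - t) * ((of_nat n - t) gchoose (n - k)) / of_nat k"

definition D3 :: "nat \<Rightarrow> complex \<Rightarrow> complex \<Rightarrow> complex \<Rightarrow> complex \<Rightarrow> complex" where
  "D3 n t x y z = conv bernpoly bernpoly (A3c n t) n x y - Hc3 n t * bernpoly n z
     - conv bernpoly bernpoly (R31c n t) n y z - conv bernpoly bernpoly (R32c n t) n x z"

lemma solve_div: "(a::complex) \<noteq> 0 \<Longrightarrow> a * x = b \<Longrightarrow> x = b / a"
  by (simp add: eq_divide_eq mult.commute)

lemma hs3a: "n \<ge> 2 \<Longrightarrow> (\<Sum>k=1..<n. 1 / (t - of_nat k)) = 1 / (t - 1) + (\<Sum>k=1..<n - 1. 1 / (t - 1 - of_nat k :: complex))"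
proof -
  assume "n \<ge> 2"
  then obtain m where m: "n = Suc (Suc m)" by (metis add_2_eq_Suc le_Suc_ex)
  have "(\<Sum>k=1..<n. 1 / (t - of_nat k)) = 1 / (t - 1) + (\<Sum>k=Suc 1..<Suc (Suc m). 1 / (t - of_nat k))"
    unfolding m by (subst sum.atLeast_Suc_lessThan) auto
  also have "(\<Sum>k=Suc 1..<Suc (Suc m). 1 / (t - of_nat k)) = (\<Sum>k=1..<Suc m. 1 / (t - of_nat (Suc k)))"
    by (rule sum.shift_bounds_Suc_ivl)
  also have "\<dots> = (\<Sum>k=1..<n - 1. 1 / (t - 1 - of_nat k))"
    unfolding m by (intro sum.cong) (auto simp: algebra_simps)
  finally show ?thesis .
qed

lemma hs3b: "(n::nat) \<ge> 2 \<Longrightarrow> (\<Sum>k=1..<n. f k) = (\<Sum>k=1..<n - 1. f k) + (f (n - 1) :: complex)"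
proof -
  assume "n \<ge> 2"
  then obtain m where m: "n = Suc m" "m \<ge> 1" by (cases n) auto
  show ?thesis unfolding m(1) using m(2) by simp
qed

lemma cA3_d1:
  assumes n: "n \<ge> 2" and t1: "t - 1 \<noteq> 0" and tj: "t - 1 - of_nat j \<noteq> 0"
  shows "A3c n t (j + 1) * of_nat (j + 1) = - (t - 1) * A3c (n - 1) (t - 1) j"
proof -
  define b1 where "b1 = ((t - 1) gchoose (n - 1))"
  define b2 where "b2 = ((t - 1 - 1) gchoose (n - 1 - 1))"
  define C where "C = (of_nat ((n - 1) choose j) :: complex)"
  define q where "q = (-1::complex)^(n - 1 - 1)"
  define J where "J = (of_nat j :: complex)"
  define N where "N = (of_nat n :: complex)"
  have q1: "(-1::complex)^(n - 1) = - q" unfolding q_def using neg1_pow_pred[of "n - 1"] n by simp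
  have nz: "N \<noteq> 0" "N - 1 \<noteq> 0" using n unfolding N_def by auto
  have N1: "(of_nat (n - 1) :: complex) = N - 1" unfolding N_def using n by (simp add: of_nat_diff)
  have J1: "J + 1 \<noteq> 0" unfolding J_def by (metis of_nat_Suc of_nat_eq_0_iff Suc_neq_Zero add.commute)
  have "(of_nat (j + 1) :: complex) * of_nat (n choose (j + 1)) = N * C"
    using nb1[of j n] unfolding C_def N_def by simp
  hence "(J + 1) * (of_nat (n choose (j + 1)) :: complex) = N * C" unfolding J_def by (simp add: add.commute)
  hence a: "(of_nat (n choose (j + 1)) :: complex) = N * C / (J + 1)" by (rule solve_div[OF J1])
  have b: "b1 = (t - 1) * b2 / (N - 1)"
    using gb2[of "n - 1" "t - 1"] n nz unfolding b1_def b2_def N1[symmetric] by (simp add: field_simps)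
  have jj: "(of_nat (j + 1) :: complex) = J + 1" unfolding J_def by simp
  have L: "A3c n t (j + 1) * of_nat (j + 1) = (- q) / N * b1 * (N * C / (J + 1)) / (t - (J + 1)) * (J + 1)"
    unfolding A3c_def b1_def[symmetric] q1 a N_def[symmetric] jj ..
  have R: "- (t - 1) * A3c (n - 1) (t - 1) j = - (t - 1) * (q / (N - 1) * b2 * C / (t - 1 - J))"
    unfolding A3c_def q_def[symmetric] b2_def[symmetric] C_def[symmetric] N1 J_def ..
  have tj': "t - 1 - J \<noteq> 0" using tj unfolding J_def .
  have tj'': "t - (J + 1) \<noteq> 0" using tj' by (simp add: algebra_simps)
  have "(- q) / N * b1 * (N * C / (J + 1)) / (t - (J + 1)) * (J + 1) = (- q) * b1 * C / (t - (J + 1)) * ((N * inverse N) * ((J + 1) * inverse (J + 1)))"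
    by (simp add: divide_inverse mult_ac)
  also have "\<dots> = (- q) * b1 * C / (t - (J + 1))" using nz J1 by simp
  also have "t - (J + 1) = t - 1 - J" by simp
  finally show ?thesis unfolding L R b using nz tj' t1 by (simp add: field_simps)
qed

lemma cA3_d2:
  assumes n: "n \<ge> 2" and j: "j \<le> n - 1" and tj: "t - of_nat j \<noteq> 0"
  shows "A3c n t j * of_nat (n - j) = (of_nat n - 1 - t) * A3c (n - 1) t j"
proof -
  define b1 where "b1 = ((t - 1) gchoose (n - 1))"
  define b2 where "b2 = ((t - 1) gchoose (n - 1 - 1))"
  define C where "C = (of_nat ((n - 1) choose j) :: complex)"
  define q where "q = (-1::complex)^(n - 1 - 1)"
  define J where "J = (of_nat j :: complex)"
  define N where "N = (of_nat n :: complex)"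
  have q1: "(-1::complex)^(n - 1) = - q" unfolding q_def using neg1_pow_pred[of "n - 1"] n by simp
  have nz: "N \<noteq> 0" "N - 1 \<noteq> 0" using n unfolding N_def by auto
  have N1: "(of_nat (n - 1) :: complex) = N - 1" unfolding N_def using n by (simp add: of_nat_diff)
  have NJ: "(of_nat (n - j) :: complex) = N - J" unfolding N_def J_def using n j by (simp add: of_nat_diff)
  have "n - j \<noteq> 0" using n j by simp
  hence "(of_nat (n - j) :: complex) \<noteq> 0" by simp
  hence NJ0: "N - J \<noteq> 0" unfolding NJ .
  have "(of_nat (n - j) :: complex) * of_nat (n choose j) = N * C"
    using nb2[of n j] unfolding C_def N_def by simp
  hence "(N - J) * (of_nat (n choose j) :: complex) = N * C" unfolding NJ .
  hence a: "(of_nat (n choose j) :: complex) = N * C / (N - J)" by (rule solve_div[OF NJ0])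
  have b: "b1 = (t - N + 1) * b2 / (N - 1)"
    using gb3[of "n - 1" "t - 1"] n nz unfolding b1_def b2_def N1[symmetric] N_def
    by (simp add: field_simps of_nat_diff)
  have L: "A3c n t j * of_nat (n - j) = (- q) / N * b1 * (N * C / (N - J)) / (t - J) * (N - J)"
    unfolding A3c_def b1_def[symmetric] q1 a NJ J_def N_def by simp
  have R: "(of_nat n - 1 - t) * A3c (n - 1) t j = (N - 1 - t) * (q / (N - 1) * b2 * C / (t - J))"
    unfolding A3c_def q_def[symmetric] b2_def[symmetric] C_def[symmetric] N1 J_def N_def ..
  have tj': "t - J \<noteq> 0" using tj unfolding J_def .
  have L2: "(- q) / N * b1 * (N * C / (N - J)) / (t - J) * (N - J) = (- q) * b1 * C / (t - J) * ((N * inverse N) * ((N - J) * inverse (N - J)))"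
    by (simp add: divide_inverse mult_ac)
  also have "\<dots> = (- q) * b1 * C / (t - J)" using nz NJ0 by simp
  finally show ?thesis unfolding L R b using nz tj' by (simp add: field_simps)
qed

lemma cR31_d1:
  assumes n: "n \<ge> 1" and j: "j \<le> n - 1" and t0: "t \<noteq> 0" and t1: "t - 1 \<noteq> 0"
  shows "- (R31c n t j * of_nat (n - j)) = - (t - 1) * R31c (n - 1) (t - 1) j"
proof (cases "j = 0")
  case True then show ?thesis by (simp add: R31c_def)
next
  case False
  have b: "of_nat (n - j) * (t gchoose (n - j)) = t * ((t - 1) gchoose (n - 1 - j))"
    using gb2[of "n - j" t] j n by (simp add: diff_diff_add add.commute)
  have "R31c n t j * of_nat (n - j) = 1 / t * (of_nat (n - j) * (t gchoose (n - j))) / of_nat j"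
    unfolding R31c_def by (simp add: field_simps)
  also have "\<dots> = ((t - 1) gchoose (n - 1 - j)) / of_nat j" unfolding b using t0 by simp
  also have "\<dots> = (t - 1) * R31c (n - 1) (t - 1) j"
    unfolding R31c_def using t1 by (simp add: diff_diff_add add.commute)
  finally have "R31c n t j * of_nat (n - j) = (t - 1) * R31c (n - 1) (t - 1) j" .
  thus ?thesis by (simp only: minus_mult_left)
qed

lemma cR31_d2:
  assumes n: "n \<ge> 1" and j: "j \<le> n - 1" and t0: "t \<noteq> 0" and tn: "t - of_nat n + 1 \<noteq> 0"
  shows "R31c n t (j + 1) * of_nat (j + 1) - R31c n t j * of_nat (n - j)
      = (of_nat n - 1 - t) * R31c (n - 1) t j + (if j = 0 then ((t - 1) gchoose (n - 1)) / (t - of_nat n + 1) else 0)"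
proof -
  define g where "g = (t gchoose (n - 1 - j))"
  have e1: "R31c n t (j + 1) * of_nat (j + 1) = g / t"
    unfolding R31c_def g_def by (simp del: of_nat_Suc add: diff_diff_add add.commute)
  show ?thesis
  proof (cases "j = 0")
    case True
    have "(t - of_nat (n - 1)) * (t gchoose (n - 1)) = t * ((t - 1) gchoose (n - 1))"
      by (rule gbinomial_absorb_comp)
    moreover have "t - of_nat (n - 1) = t - of_nat n + 1" using n by (simp add: of_nat_diff)
    ultimately have "g / t = ((t - 1) gchoose (n - 1)) / (t - of_nat n + 1)"
      using True t0 tn unfolding g_def by (simp add: field_simps)
    thus ?thesis using True e1 by (simp add: R31c_def)
  next
    case False
    have gg: "of_nat (n - j) * (t gchoose (n - j)) = (t - of_nat (n - 1 - j)) * g"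
      unfolding g_def using gb1[of "n - 1 - j" t] j n False by (simp add: Suc_diff_Suc)
    have h: "t - of_nat (n - 1 - j) = t - of_nat n + 1 + of_nat j" using j n False by (simp add: of_nat_diff)
    have "R31c n t (j + 1) * of_nat (j + 1) - R31c n t j * of_nat (n - j)
        = g / t - (of_nat (n - j) * (t gchoose (n - j))) / (t * of_nat j)"
      unfolding e1 by (simp add: R31c_def field_simps)
    also have "\<dots> = (of_nat n - 1 - t) * (g / t / of_nat j)"
      unfolding gg h using False t0 by (simp add: field_simps)
    also have "\<dots> = (of_nat n - 1 - t) * R31c (n - 1) t j"
      unfolding R31c_def g_def by (simp add: diff_diff_add add.commute)
    finally show ?thesis using False by simp
  qed
qed

lemma cR32_d1:
  assumes n: "n \<ge> 1" and j: "j \<le> n - 1" and tn: "of_nat n - t \<noteq> 0" and t1: "t - 1 \<noteq> 0"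
  shows "R32c n t (j + 1) * of_nat (j + 1) - R32c n t j * of_nat (n - j)
      = - (t - 1) * R32c (n - 1) (t - 1) j + (if j = 0 then ((t - 1) gchoose (n - 1)) / (t - 1) else 0)"
proof -
  define s where "s = of_nat n - t"
  define g where "g = (s gchoose (n - 1 - j))"
  define p where "p = (-1::complex)^n"
  have s0: "s \<noteq> 0" using tn unfolding s_def .
  have s1: "of_nat (n - 1) - (t - 1) = s" using n by (simp add: s_def of_nat_diff)
  have p1: "(-1::complex)^(n - 1) = - p" unfolding p_def using neg1_pow_pred[OF n] by simp
  have pp: "p * p = 1" unfolding p_def by (simp add: power_mult_distrib[symmetric])
  have e1: "R32c n t (j + 1) * of_nat (j + 1) = p / s * g"
    unfolding R32c_def g_def s_def[symmetric] p_def by (simp del: of_nat_Suc add: diff_diff_add add.commute)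
  show ?thesis
  proof (cases "j = 0")
    case True
    define b1 where "b1 = ((t - 1) gchoose (n - 1))"
    define g2 where "g2 = ((t - 1 - 1) gchoose (n - 1))"
    have a: "g = - p * g2"
      unfolding g_def g2_def True using gbinomial_negated_upper[of s "n - 1"] n p1
      by (simp add: s_def of_nat_diff)
    have b: "(t - 1 - of_nat (n - 1)) * b1 = (t - 1) * g2"
      unfolding b1_def g2_def by (rule gbinomial_absorb_comp)
    have c: "t - 1 - of_nat (n - 1) = - s" using n by (simp add: s_def of_nat_diff)
    have "(t - 1) * g2 = - s * b1" using b unfolding c by simp
    hence g2e: "g2 = - s * b1 / (t - 1)" by (rule solve_div[OF t1])
    have "p / s * g = (p * p) * b1 / (t - 1)"
      unfolding a g2e using s0 t1 by (simp add: field_simps)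
    also have "\<dots> = b1 / (t - 1)" unfolding pp by simp
    finally show ?thesis using True e1 unfolding b1_def by (simp add: R32c_def)
  next
    case False
    define J where "J = (of_nat j :: complex)"
    have J0: "J \<noteq> 0" using False unfolding J_def by simp
    have gg: "of_nat (n - j) * (s gchoose (n - j)) = (1 - t + J) * g"
    proof -
      have "of_nat (n - j) * (s gchoose (n - j)) = (s - of_nat (n - 1 - j)) * g"
        unfolding g_def using gb1[of "n - 1 - j" s] j n False by (simp add: Suc_diff_Suc)
      moreover have "s - of_nat (n - 1 - j) = 1 - t + J"
        using j n False unfolding J_def by (simp add: s_def of_nat_diff)
      ultimately show ?thesis by simp
    qed
    have e2: "R32c n t j * of_nat (n - j) = p / s * ((1 - t + J) * g) / J"
    proof -
      have "R32c n t j * of_nat (n - j) = p / s * (of_nat (n - j) * (s gchoose (n - j))) / J"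
        unfolding R32c_def s_def[symmetric] p_def J_def by (simp add: field_simps)
      thus ?thesis unfolding gg .
    qed
    have e3: "R32c (n - 1) (t - 1) j = - p / s * g / J"
      unfolding R32c_def s1 p1 g_def J_def by (simp add: diff_diff_add add.commute)
    show ?thesis unfolding e1 e2 e3 using False s0 J0 by (simp add: field_simps)
  qed
qed

lemma cR32_d2:
  assumes n: "n \<ge> 1" and j: "j \<le> n - 1" and tn: "of_nat n - t \<noteq> 0" and tn1: "of_nat n - 1 - t \<noteq> 0"
  shows "- (R32c n t j * of_nat (n - j)) = (of_nat n - 1 - t) * R32c (n - 1) t j"
proof (cases "j = 0")
  case True then show ?thesis by (simp add: R32c_def)
next
  case False
  define s where "s = of_nat n - t"
  define p where "p = (-1::complex)^n"
  have s1: "of_nat (n - 1) - t = s - 1" using n by (simp add: s_def of_nat_diff)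
  have p1: "(-1::complex)^(n - 1) = - p" unfolding p_def using neg1_pow_pred[OF n] by simp
  have b: "of_nat (n - j) * (s gchoose (n - j)) = s * ((s - 1) gchoose (n - 1 - j))"
    using gb2[of "n - j" s] j n by (simp add: diff_diff_add add.commute)
  have "- (R32c n t j * of_nat (n - j)) = - (p / s * (of_nat (n - j) * (s gchoose (n - j))) / of_nat j)"
    unfolding R32c_def s_def[symmetric] p_def by (simp add: field_simps)
  also have "\<dots> = - p * ((s - 1) gchoose (n - 1 - j)) / of_nat j"
    unfolding b using tn unfolding s_def[symmetric] by (simp add: field_simps)
  also have "\<dots> = (of_nat n - 1 - t) * R32c (n - 1) t j"
  proof -
    have e: "of_nat n - 1 - t = s - 1" by (simp add: s_def)
    have s10: "s - 1 \<noteq> 0" using tn1 unfolding e .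
    have j0: "(of_nat j :: complex) \<noteq> 0" using False by simp
    show ?thesis unfolding R32c_def s1 p1 e using s10 j0 by (simp add: field_simps)
  qed
  finally show ?thesis .
qed

lemma cH3_d1:
  assumes n: "n \<ge> 2" and t1: "t - 1 \<noteq> 0"
  shows "- (of_nat n * Hc3 n t) = - (t - 1) * Hc3 (n - 1) (t - 1) - ((t - 1) gchoose (n - 1)) / (t - 1)"
proof -
  define b1 where "b1 = ((t - 1) gchoose (n - 1))"
  define b2 where "b2 = ((t - 1 - 1) gchoose (n - 1 - 1))"
  define S where "S = (\<Sum>k=1..<n - 1. 1 / (t - 1 - of_nat k))"
  have nz: "of_nat n \<noteq> (0::complex)" "of_nat (n - 1) \<noteq> (0::complex)" using n by auto
  have b: "of_nat (n - 1) * b1 = (t - 1) * b2"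
    unfolding b1_def b2_def using gb2[of "n - 1" "t - 1"] n by simp
  have H1: "of_nat n * Hc3 n t = b1 * (1 / (t - 1) + S)"
    unfolding Hc3_def hs3a[OF n] b1_def S_def using nz by simp
  have H2: "Hc3 (n - 1) (t - 1) = 1 / of_nat (n - 1) * b2 * S"
    unfolding Hc3_def b2_def S_def ..
  have "(t - 1) * Hc3 (n - 1) (t - 1) = b1 * S"
  proof -
    have "(t - 1) * Hc3 (n - 1) (t - 1) = ((t - 1) * b2) * S / of_nat (n - 1)"
      unfolding H2 by (simp add: field_simps)
    also have "\<dots> = b1 * S" unfolding b[symmetric] using nz by simp
    finally show ?thesis .
  qed
  hence X: "- (t - 1) * Hc3 (n - 1) (t - 1) = - (b1 * S)" by (metis minus_mult_left)
  show ?thesis unfolding H1 X b1_def[symmetric] by (simp add: algebra_simps)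
qed

lemma cH3_d2:
  assumes n: "n \<ge> 2" and tn: "t - of_nat n + 1 \<noteq> 0"
  shows "- (of_nat n * Hc3 n t) = (of_nat n - 1 - t) * Hc3 (n - 1) t - ((t - 1) gchoose (n - 1)) / (t - of_nat n + 1)"
proof -
  define b1 where "b1 = ((t - 1) gchoose (n - 1))"
  define b2 where "b2 = ((t - 1) gchoose (n - 1 - 1))"
  define S where "S = (\<Sum>k=1..<n - 1. 1 / (t - of_nat k))"
  have nz: "of_nat n \<noteq> (0::complex)" "of_nat (n - 1) \<noteq> (0::complex)" using n by auto
  have b: "of_nat (n - 1) * b1 = (t - of_nat n + 1) * b2"
    unfolding b1_def b2_def using gb3[of "n - 1" "t - 1"] n by (simp add: of_nat_diff algebra_simps)
  have s: "(\<Sum>k=1..<n. 1 / (t - of_nat k)) = S + 1 / (t - of_nat n + 1)"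
    using hs3b[OF n, of "\<lambda>k. 1 / (t - of_nat k)"] n unfolding S_def by (simp add: of_nat_diff algebra_simps)
  have H1: "of_nat n * Hc3 n t = b1 * (S + 1 / (t - of_nat n + 1))"
    unfolding Hc3_def s b1_def using nz by simp
  have H2: "Hc3 (n - 1) t = 1 / of_nat (n - 1) * b2 * S"
    unfolding Hc3_def b2_def S_def ..
  have "(of_nat n - 1 - t) * Hc3 (n - 1) t = - (b1 * S)"
  proof -
    have "(of_nat n - 1 - t) * Hc3 (n - 1) t = - ((t - of_nat n + 1) * b2) * S / of_nat (n - 1)"
      unfolding H2 by (simp add: field_simps)
    also have "\<dots> = - (b1 * S)" unfolding b[symmetric] using nz by simp
    finally show ?thesis .
  qed
  thus ?thesis unfolding H1 b1_def[symmetric] by (simp add: algebra_simps)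
qed


lemma D3_d1:
  assumes n: "n \<ge> 2" and av: "avoid n t"
  shows "((\<lambda>s. D3 n t (a + s) b (c - s)) has_field_derivative (- (t - 1) * D3 (n - 1) (t - 1) (a + s0) b (c - s0))) (at s0)"
proof -
  define u where "u = a + 1 * s0"
  define v where "v = b + 0 * s0"
  define w where "w = c + (-1) * s0"
  have e: "(\<lambda>s. D3 n t (a + s) b (c - s)) = (\<lambda>s. conv bernpoly bernpoly (A3c n t) n (a + 1 * s) (b + 0 * s)
      - Hc3 n t * bernpoly n (c + (-1) * s)
      - conv bernpoly bernpoly (R31c n t) n (b + 0 * s) (c + (-1) * s)
      - conv bernpoly bernpoly (R32c n t) n (a + 1 * s) (c + (-1) * s))"
    by (simp add: D3_def)
  have der: "((\<lambda>s. conv bernpoly bernpoly (A3c n t) n (a + 1 * s) (b + 0 * s)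
      - Hc3 n t * bernpoly n (c + (-1) * s)
      - conv bernpoly bernpoly (R31c n t) n (b + 0 * s) (c + (-1) * s)
      - conv bernpoly bernpoly (R32c n t) n (a + 1 * s) (c + (-1) * s)) has_field_derivative
     conv bernpoly bernpoly (\<lambda>j. 1 * A3c n t (j + 1) * of_nat (j + 1) + 0 * A3c n t j * of_nat (n - j)) (n - 1) u v
     - Hc3 n t * ((-1) * of_nat n * bernpoly (n - 1) w)
     - conv bernpoly bernpoly (\<lambda>j. 0 * R31c n t (j + 1) * of_nat (j + 1) + (-1) * R31c n t j * of_nat (n - j)) (n - 1) v w
     - conv bernpoly bernpoly (\<lambda>j. 1 * R32c n t (j + 1) * of_nat (j + 1) + (-1) * R32c n t j * of_nat (n - j)) (n - 1) u w) (at s0)"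
    unfolding u_def v_def w_def using n
    by (intro DERIV_diff DERIV_cmult conv_deriv appell_bern appell_line) auto
  have t0: "t \<noteq> 0" using avoid_ne[OF av, of 0] by simp
  have t1: "t - 1 \<noteq> 0" using avoid_ne[OF av, of 1] n by simp
  have tn: "of_nat n - t \<noteq> 0" using avoid_ne'[OF av, of n] by simp
  have eq1: "conv bernpoly bernpoly (\<lambda>j. 1 * A3c n t (j + 1) * of_nat (j + 1) + 0 * A3c n t j * of_nat (n - j)) (n - 1) u v
     = conv bernpoly bernpoly (\<lambda>j. - (t - 1) * A3c (n - 1) (t - 1) j) (n - 1) u v"
  proof (intro conv_cong)
    fix j assume j: "j \<le> n - 1"
    have "t - of_nat (j + 1) \<noteq> 0" using avoid_ne[OF av, of "j + 1"] j n by simp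
    hence "t - 1 - of_nat j \<noteq> 0" by (simp add: algebra_simps)
    thus "1 * A3c n t (j + 1) * of_nat (j + 1) + 0 * A3c n t j * of_nat (n - j) = - (t - 1) * A3c (n - 1) (t - 1) j"
      using cA3_d1[of n t j] n t1 by simp
  qed
  have eq2: "conv bernpoly bernpoly (\<lambda>j. 0 * R31c n t (j + 1) * of_nat (j + 1) + (-1) * R31c n t j * of_nat (n - j)) (n - 1) v w
     = conv bernpoly bernpoly (\<lambda>j. - (t - 1) * R31c (n - 1) (t - 1) j) (n - 1) v w"
  proof (intro conv_cong)
    fix j assume "j \<le> n - 1"
    thus "0 * R31c n t (j + 1) * of_nat (j + 1) + (-1) * R31c n t j * of_nat (n - j) = - (t - 1) * R31c (n - 1) (t - 1) j"
      using cR31_d1[of n j t] n t0 t1 by simp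
  qed
  have eq3: "conv bernpoly bernpoly (\<lambda>j. 1 * R32c n t (j + 1) * of_nat (j + 1) + (-1) * R32c n t j * of_nat (n - j)) (n - 1) u w
     = conv bernpoly bernpoly (\<lambda>j. - (t - 1) * R32c (n - 1) (t - 1) j) (n - 1) u w
       + ((t - 1) gchoose (n - 1)) / (t - 1) * bernpoly 0 u * bernpoly (n - 1) w"
  proof (intro conv_cong_delta)
    fix j assume "j \<le> n - 1"
    thus "1 * R32c n t (j + 1) * of_nat (j + 1) + (-1) * R32c n t j * of_nat (n - j) =
      - (t - 1) * R32c (n - 1) (t - 1) j + (if j = 0 then ((t - 1) gchoose (n - 1)) / (t - 1) else 0)"
      using cR32_d1[of n j t] n tn t1 by simp
  qed
  have hh: "- (of_nat n * Hc3 n t) = - (t - 1) * Hc3 (n - 1) (t - 1) - ((t - 1) gchoose (n - 1)) / (t - 1)"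
    using cH3_d1[OF n t1] .
  have hh': "- (t - 1) * Hc3 (n - 1) (t - 1) = - (of_nat n * Hc3 n t) + ((t - 1) gchoose (n - 1)) / (t - 1)"
    unfolding hh by simp
  have tgt: "- (t - 1) * D3 (n - 1) (t - 1) u v w =
     conv bernpoly bernpoly (\<lambda>j. - (t - 1) * A3c (n - 1) (t - 1) j) (n - 1) u v
     - (- (t - 1) * Hc3 (n - 1) (t - 1)) * bernpoly (n - 1) w
     - conv bernpoly bernpoly (\<lambda>j. - (t - 1) * R31c (n - 1) (t - 1) j) (n - 1) v w
     - conv bernpoly bernpoly (\<lambda>j. - (t - 1) * R32c (n - 1) (t - 1) j) (n - 1) u w"
    unfolding D3_def right_diff_distrib conv_scale by (simp only: mult.assoc)
  have "conv bernpoly bernpoly (\<lambda>j. 1 * A3c n t (j + 1) * of_nat (j + 1) + 0 * A3c n t j * of_nat (n - j)) (n - 1) u v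
     - Hc3 n t * ((-1) * of_nat n * bernpoly (n - 1) w)
     - conv bernpoly bernpoly (\<lambda>j. 0 * R31c n t (j + 1) * of_nat (j + 1) + (-1) * R31c n t j * of_nat (n - j)) (n - 1) v w
     - conv bernpoly bernpoly (\<lambda>j. 1 * R32c n t (j + 1) * of_nat (j + 1) + (-1) * R32c n t j * of_nat (n - j)) (n - 1) u w
     = - (t - 1) * D3 (n - 1) (t - 1) u v w"
    unfolding tgt eq1 eq2 eq3 hh' by (simp add: algebra_simps)
  with der e have "((\<lambda>s. D3 n t (a + s) b (c - s)) has_field_derivative - (t - 1) * D3 (n - 1) (t - 1) u v w) (at s0)"
    by simp
  thus ?thesis unfolding u_def v_def w_def by simp
qed

lemma D3_d2:
  assumes n: "n \<ge> 2" and av: "avoid n t"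
  shows "((\<lambda>s. D3 n t a (b + s) (c - s)) has_field_derivative ((of_nat n - 1 - t) * D3 (n - 1) t a (b + s0) (c - s0))) (at s0)"
proof -
  define u where "u = a + 0 * s0"
  define v where "v = b + 1 * s0"
  define w where "w = c + (-1) * s0"
  have e: "(\<lambda>s. D3 n t a (b + s) (c - s)) = (\<lambda>s. conv bernpoly bernpoly (A3c n t) n (a + 0 * s) (b + 1 * s)
      - Hc3 n t * bernpoly n (c + (-1) * s)
      - conv bernpoly bernpoly (R31c n t) n (b + 1 * s) (c + (-1) * s)
      - conv bernpoly bernpoly (R32c n t) n (a + 0 * s) (c + (-1) * s))"
    by (simp add: D3_def)
  have der: "((\<lambda>s. conv bernpoly bernpoly (A3c n t) n (a + 0 * s) (b + 1 * s)
      - Hc3 n t * bernpoly n (c + (-1) * s)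
      - conv bernpoly bernpoly (R31c n t) n (b + 1 * s) (c + (-1) * s)
      - conv bernpoly bernpoly (R32c n t) n (a + 0 * s) (c + (-1) * s)) has_field_derivative
     conv bernpoly bernpoly (\<lambda>j. 0 * A3c n t (j + 1) * of_nat (j + 1) + 1 * A3c n t j * of_nat (n - j)) (n - 1) u v
     - Hc3 n t * ((-1) * of_nat n * bernpoly (n - 1) w)
     - conv bernpoly bernpoly (\<lambda>j. 1 * R31c n t (j + 1) * of_nat (j + 1) + (-1) * R31c n t j * of_nat (n - j)) (n - 1) v w
     - conv bernpoly bernpoly (\<lambda>j. 0 * R32c n t (j + 1) * of_nat (j + 1) + (-1) * R32c n t j * of_nat (n - j)) (n - 1) u w) (at s0)"
    unfolding u_def v_def w_def using n
    by (intro DERIV_diff DERIV_cmult conv_deriv appell_bern appell_line) auto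
  have t0: "t \<noteq> 0" using avoid_ne[OF av, of 0] by simp
  have tn: "of_nat n - t \<noteq> 0" using avoid_ne'[OF av, of n] by simp
  have tn1: "of_nat n - 1 - t \<noteq> 0" using avoid_ne'[OF av, of "n - 1"] n by (simp add: of_nat_diff)
  have tn2: "t - of_nat n + 1 \<noteq> 0" using tn1 by (simp add: algebra_simps)
  have eq1: "conv bernpoly bernpoly (\<lambda>j. 0 * A3c n t (j + 1) * of_nat (j + 1) + 1 * A3c n t j * of_nat (n - j)) (n - 1) u v
     = conv bernpoly bernpoly (\<lambda>j. (of_nat n - 1 - t) * A3c (n - 1) t j) (n - 1) u v"
  proof (intro conv_cong)
    fix j assume j: "j \<le> n - 1"
    have "t - of_nat j \<noteq> 0" using avoid_ne[OF av, of j] j n by simp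
    thus "0 * A3c n t (j + 1) * of_nat (j + 1) + 1 * A3c n t j * of_nat (n - j) = (of_nat n - 1 - t) * A3c (n - 1) t j"
      using cA3_d2[of n j t] n j by simp
  qed
  have eq2: "conv bernpoly bernpoly (\<lambda>j. 1 * R31c n t (j + 1) * of_nat (j + 1) + (-1) * R31c n t j * of_nat (n - j)) (n - 1) v w
     = conv bernpoly bernpoly (\<lambda>j. (of_nat n - 1 - t) * R31c (n - 1) t j) (n - 1) v w
       + ((t - 1) gchoose (n - 1)) / (t - of_nat n + 1) * bernpoly 0 v * bernpoly (n - 1) w"
  proof (intro conv_cong_delta)
    fix j assume "j \<le> n - 1"
    thus "1 * R31c n t (j + 1) * of_nat (j + 1) + (-1) * R31c n t j * of_nat (n - j) =
      (of_nat n - 1 - t) * R31c (n - 1) t j + (if j = 0 then ((t - 1) gchoose (n - 1)) / (t - of_nat n + 1) else 0)"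
      using cR31_d2[of n j t] n t0 tn2 by simp
  qed
  have eq3: "conv bernpoly bernpoly (\<lambda>j. 0 * R32c n t (j + 1) * of_nat (j + 1) + (-1) * R32c n t j * of_nat (n - j)) (n - 1) u w
     = conv bernpoly bernpoly (\<lambda>j. (of_nat n - 1 - t) * R32c (n - 1) t j) (n - 1) u w"
  proof (intro conv_cong)
    fix j assume "j \<le> n - 1"
    thus "0 * R32c n t (j + 1) * of_nat (j + 1) + (-1) * R32c n t j * of_nat (n - j) = (of_nat n - 1 - t) * R32c (n - 1) t j"
      using cR32_d2[of n j t] n tn tn1 by simp
  qed
  have hh: "- (of_nat n * Hc3 n t) = (of_nat n - 1 - t) * Hc3 (n - 1) t - ((t - 1) gchoose (n - 1)) / (t - of_nat n + 1)"
    using cH3_d2[OF n tn2] .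
  have hh': "(of_nat n - 1 - t) * Hc3 (n - 1) t = - (of_nat n * Hc3 n t) + ((t - 1) gchoose (n - 1)) / (t - of_nat n + 1)"
    unfolding hh by simp
  have tgt: "(of_nat n - 1 - t) * D3 (n - 1) t u v w =
     conv bernpoly bernpoly (\<lambda>j. (of_nat n - 1 - t) * A3c (n - 1) t j) (n - 1) u v
     - ((of_nat n - 1 - t) * Hc3 (n - 1) t) * bernpoly (n - 1) w
     - conv bernpoly bernpoly (\<lambda>j. (of_nat n - 1 - t) * R31c (n - 1) t j) (n - 1) v w
     - conv bernpoly bernpoly (\<lambda>j. (of_nat n - 1 - t) * R32c (n - 1) t j) (n - 1) u w"
    unfolding D3_def right_diff_distrib conv_scale by (simp only: mult.assoc)
  have "conv bernpoly bernpoly (\<lambda>j. 0 * A3c n t (j + 1) * of_nat (j + 1) + 1 * A3c n t j * of_nat (n - j)) (n - 1) u v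
     - Hc3 n t * ((-1) * of_nat n * bernpoly (n - 1) w)
     - conv bernpoly bernpoly (\<lambda>j. 1 * R31c n t (j + 1) * of_nat (j + 1) + (-1) * R31c n t j * of_nat (n - j)) (n - 1) v w
     - conv bernpoly bernpoly (\<lambda>j. 0 * R32c n t (j + 1) * of_nat (j + 1) + (-1) * R32c n t j * of_nat (n - j)) (n - 1) u w
     = (of_nat n - 1 - t) * D3 (n - 1) t u v w"
    unfolding tgt eq1 eq2 eq3 hh' by (simp add: algebra_simps)
  with der e have "((\<lambda>s. D3 n t a (b + s) (c - s)) has_field_derivative (of_nat n - 1 - t) * D3 (n - 1) t u v w) (at s0)"
    by simp
  thus ?thesis unfolding u_def v_def w_def by simp
qed


lemma bern_diff1: "bernpoly k 1 - bernpoly k 0 = (if k = 1 then 1 else 0)"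
  unfolding bernpoly_at_1 bernpoly_at_0 by simp

lemma conv_B_x: "m \<ge> 1 \<Longrightarrow> conv bernpoly Q c m 1 v - conv bernpoly Q c m 0 v = c 1 * Q (m - 1) v"
proof -
  assume m: "m \<ge> 1"
  have "conv bernpoly Q c m 1 v - conv bernpoly Q c m 0 v = (\<Sum>k\<le>m. c k * (bernpoly k 1 - bernpoly k 0) * Q (m - k) v)"
    unfolding conv_def sum_subtractf[symmetric] by (intro sum.cong) (auto simp: algebra_simps)
  also have "\<dots> = (\<Sum>k\<le>m. if k = 1 then c 1 * Q (m - 1) v else 0)"
    unfolding bern_diff1 by (intro sum.cong) auto
  also have "\<dots> = c 1 * Q (m - 1) v" using m by simp
  finally show ?thesis .
qed

lemma conv_B_y: "m \<ge> 1 \<Longrightarrow> conv P bernpoly c m u 1 - conv P bernpoly c m u 0 = c (m - 1) * P (m - 1) u"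
proof -
  assume m: "m \<ge> 1"
  have "conv P bernpoly c m u 1 - conv P bernpoly c m u 0 = (\<Sum>k\<le>m. c k * P k u * (bernpoly (m - k) 1 - bernpoly (m - k) 0))"
    unfolding conv_def sum_subtractf[symmetric] by (intro sum.cong) (auto simp: algebra_simps)
  also have "\<dots> = (\<Sum>k\<le>m. if k = m - 1 then c (m - 1) * P (m - 1) u else 0)"
    unfolding bern_diff1 using m by (intro sum.cong) auto
  also have "\<dots> = c (m - 1) * P (m - 1) u" using m by simp
  finally show ?thesis .
qed

lemma D3_base:
  assumes av: "avoid 1 t"
  shows "D3 1 t x y z = 0"
proof -
  have t0: "t \<noteq> 0" using avoid_ne[OF av, of 0] by simp
  have t1: "t - 1 \<noteq> 0" using avoid_ne[OF av, of 1] by simp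
  have a: "conv bernpoly bernpoly (A3c 1 t) 1 x y = bernpoly 1 y / t + bernpoly 1 x / (t - 1)"
    unfolding conv_1 A3c_def by simp
  have h: "Hc3 1 t = 0" unfolding Hc3_def by simp
  have b: "conv bernpoly bernpoly (R31c 1 t) 1 y z = bernpoly 1 y / t"
    unfolding conv_1 R31c_def by simp
  have c: "conv bernpoly bernpoly (R32c 1 t) 1 x z = - 1 / (1 - t) * bernpoly 1 x"
    unfolding conv_1 R32c_def by simp
  have d: "- 1 / (1 - t) = 1 / (t - 1)" by (metis divide_minus_right minus_diff_eq minus_divide_left)
  show ?thesis unfolding D3_def a h b c d by simp
qed

lemma D3_E1:
  assumes M: "M \<ge> 2" and av: "avoid M T"
  shows "D3 M T 1 0 0 - D3 M T 0 0 1 = 0"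
proof -
  have T0: "T \<noteq> 0" using avoid_ne[OF av, of 0] by simp
  have T1: "T - 1 \<noteq> 0" using avoid_ne[OF av, of 1] M by simp
  have MT: "of_nat M - T \<noteq> 0" using avoid_ne'[OF av, of M] by simp
  have M1: "(of_nat (M - 1) :: complex) \<noteq> 0" using M by simp
  have MM1: "M - 1 \<ge> 1" using M by simp
  define B where "B = bern (M - 1)"
  have "D3 M T 1 0 0 - D3 M T 0 0 1 =
      (conv bernpoly bernpoly (A3c M T) M 1 0 - conv bernpoly bernpoly (A3c M T) M 0 0)
    - Hc3 M T * (bernpoly M 0 - bernpoly M 1)
    + (conv bernpoly bernpoly (R31c M T) M 0 1 - conv bernpoly bernpoly (R31c M T) M 0 0)
    - ((conv bernpoly bernpoly (R32c M T) M 1 0 - conv bernpoly bernpoly (R32c M T) M 0 0)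
       - (conv bernpoly bernpoly (R32c M T) M 0 1 - conv bernpoly bernpoly (R32c M T) M 0 0))"
    unfolding D3_def by (simp add: algebra_simps)
  also have "\<dots> = B * (A3c M T 1 + R31c M T (M - 1) - R32c M T 1 + R32c M T (M - 1))"
    unfolding conv_B_x[OF MM1[THEN order_trans[OF _ diff_le_self]]] conv_B_y[OF MM1[THEN order_trans[OF _ diff_le_self]]]
    using bern_diff1[of M] M unfolding B_def bernpoly_at_0 by (simp add: algebra_simps)
  also have "\<dots> = 0"
  proof (cases "M = 2")
    case True
    show ?thesis unfolding True A3c_def R31c_def R32c_def using T0 T1 MT[unfolded True]
      by (simp add: numeral_2_eq_2 field_simps)
  next
    case False
    show ?thesis
    proof (cases "even M")
      case True
      hence "odd (M - 1)" "M - 1 \<ge> 3" using M False by auto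
      hence "B = 0" unfolding B_def by (rule bern_odd)
      thus ?thesis by simp
    next
      case odd: False
      have p: "(-1::complex)^M = -1" "(-1::complex)^(M - 1) = 1" using odd M by (auto simp: neg1_pow_pred)
      have r: "((of_nat (M - 1) - (T - 1)) gchoose (M - 1)) / (of_nat (M - 1) - (T - 1)) = - ((-1)^(M - 1) * ((T - 1) gchoose (M - 1)) / (T - 1))"
        using binom_refl_ratio[of "T - 1" "M - 1"] T1 MT M by (simp add: of_nat_diff)
      have e: "of_nat (M - 1) - (T - 1) = of_nat M - T" using M by (simp add: of_nat_diff)
      have a1: "A3c M T 1 = (-1)^(M - 1) * ((T - 1) gchoose (M - 1)) / (T - 1)"
        unfolding A3c_def using M by (simp add: field_simps)
      have a2: "R31c M T (M - 1) = 1 / of_nat (M - 1)"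
        unfolding R31c_def using M T0 by (simp add: diff_diff_cancel)
      have a3: "R32c M T 1 = (-1)^M * (((of_nat M - T) gchoose (M - 1)) / (of_nat M - T))"
        unfolding R32c_def by simp
      have a4: "R32c M T (M - 1) = (-1)^M / of_nat (M - 1)"
        unfolding R32c_def using M MT by (simp add: diff_diff_cancel)
      show ?thesis unfolding a1 a2 a3 a4 r[unfolded e] p by simp
    qed
  qed
  finally show ?thesis .
qed

lemma D3_E2:
  assumes M: "M \<ge> 2" and av: "avoid M T"
  shows "D3 M T 0 1 0 - D3 M T 0 0 1 = 0"
proof -
  have T0: "T \<noteq> 0" using avoid_ne[OF av, of 0] by simp
  have T1: "T - 1 \<noteq> 0" using avoid_ne[OF av, of 1] M by simp
  have MT: "of_nat M - T \<noteq> 0" using avoid_ne'[OF av, of M] by simp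
  have TM1: "T - of_nat (M - 1) \<noteq> 0" using avoid_ne[OF av, of "M - 1"] by simp
  have MM1: "M - 1 \<ge> 1" using M by simp
  have M1: "M \<ge> 1" using M by simp
  define B where "B = bern (M - 1)"
  have "D3 M T 0 1 0 - D3 M T 0 0 1 =
      (conv bernpoly bernpoly (A3c M T) M 0 1 - conv bernpoly bernpoly (A3c M T) M 0 0)
    - Hc3 M T * (bernpoly M 0 - bernpoly M 1)
    - ((conv bernpoly bernpoly (R31c M T) M 1 0 - conv bernpoly bernpoly (R31c M T) M 0 0)
       - (conv bernpoly bernpoly (R31c M T) M 0 1 - conv bernpoly bernpoly (R31c M T) M 0 0))
    + (conv bernpoly bernpoly (R32c M T) M 0 1 - conv bernpoly bernpoly (R32c M T) M 0 0)"
    unfolding D3_def by (simp add: algebra_simps)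
  also have "\<dots> = B * (A3c M T (M - 1) - R31c M T 1 + R31c M T (M - 1) + R32c M T (M - 1))"
    unfolding conv_B_x[OF M1] conv_B_y[OF M1]
    using bern_diff1[of M] M unfolding B_def bernpoly_at_0 by (simp add: algebra_simps)
  also have "\<dots> = 0"
  proof (cases "M = 2")
    case True
    show ?thesis unfolding True A3c_def R31c_def R32c_def using T0 T1 MT[unfolded True]
      by (simp add: numeral_2_eq_2 field_simps)
  next
    case False
    show ?thesis
    proof (cases "even M")
      case True
      hence "odd (M - 1)" "M - 1 \<ge> 3" using M False by auto
      hence "B = 0" unfolding B_def by (rule bern_odd)
      thus ?thesis by simp
    next
      case odd: False
      have p: "(-1::complex)^M = -1" "(-1::complex)^(M - 1) = 1" using odd M by (auto simp: neg1_pow_pred)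
      have ab: "(T - of_nat (M - 1)) * (T gchoose (M - 1)) = T * ((T - 1) gchoose (M - 1))"
        by (rule gbinomial_absorb_comp)
      have cm: "M choose (M - 1) = M" using M binomial_symmetric[of "M - 1" M] by simp
      have a1: "A3c M T (M - 1) = ((T - 1) gchoose (M - 1)) / (T - of_nat (M - 1))"
      proof -
        have "A3c M T (M - 1) = (1 / of_nat M * of_nat M) * ((T - 1) gchoose (M - 1)) / (T - of_nat (M - 1))"
          unfolding A3c_def p cm by (simp add: divide_inverse mult_ac)
        also have "1 / of_nat M * of_nat M = (1::complex)" using M by simp
        finally show ?thesis by simp
      qed
      have a2: "R31c M T 1 = ((T - 1) gchoose (M - 1)) / (T - of_nat (M - 1))"
      proof -
        have "R31c M T 1 = (T gchoose (M - 1)) / T" unfolding R31c_def by simp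
        also have "\<dots> = ((T - 1) gchoose (M - 1)) / (T - of_nat (M - 1))"
          using ab T0 TM1 by (simp add: field_simps)
        finally show ?thesis .
      qed
      have a3: "R31c M T (M - 1) = 1 / of_nat (M - 1)"
        unfolding R31c_def using M T0 by (simp add: diff_diff_cancel)
      have a4: "R32c M T (M - 1) = (-1)^M / of_nat (M - 1)"
        unfolding R32c_def using M MT by (simp add: diff_diff_cancel)
      show ?thesis unfolding a1 a2 a3 a4 p by simp
    qed
  qed
  finally show ?thesis .
qed


lemma D3_zero:
  assumes "n \<ge> 1" "avoid n t" "x + y + z = 1"
  shows "D3 n t x y z = 0"
  using assms
proof (induction n arbitrary: t x y z rule: nat_induct_at_least)
  case base
  then show ?case using D3_base by blast
next
  case (Suc n)
  define N where "N = Suc n"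
  have N: "N \<ge> 2" using Suc.hyps N_def by simp
  have av: "avoid N t" using Suc.prems(1) N_def by simp
  have sxyz: "x + y + z = 1" using Suc.prems(2) .
  have avn: "avoid n t" using avoid_pred2[OF av] N_def by simp
  have avn1: "avoid n (t - 1)" using avoid_pred1[OF av] N_def by simp
  have IH1: "D3 n t a b c = 0" if "a + b + c = 1" for a b c
    using Suc.IH[OF avn that] .
  have IH2: "D3 n (t - 1) a b c = 0" if "a + b + c = 1" for a b c
    using Suc.IH[OF avn1 that] .
  have dy: "((\<lambda>s. D3 N t a (0 + s) (d - s)) has_field_derivative 0) (at s)" if "a + d = 1" for a d s
  proof -
    have "((\<lambda>s. D3 N t a (0 + s) (d - s)) has_field_derivative ((of_nat N - 1 - t) * D3 (N - 1) t a (0 + s) (d - s))) (at s)"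
      by (rule D3_d2[OF N av])
    moreover have "a + (0 + s) + (d - s) = 1" using that by simp
    hence "D3 (N - 1) t a (0 + s) (d - s) = 0" using IH1 N_def by simp
    ultimately show ?thesis by simp
  qed
  have dx: "((\<lambda>s. D3 N t (0 + s) 0 (1 - s)) has_field_derivative 0) (at s)" for s
  proof -
    have "((\<lambda>s. D3 N t (0 + s) 0 (1 - s)) has_field_derivative (- (t - 1) * D3 (N - 1) (t - 1) (0 + s) 0 (1 - s))) (at s)"
      by (rule D3_d1[OF N av])
    moreover have "(0 + s) + 0 + (1 - s) = 1" by simp
    hence "D3 (N - 1) (t - 1) (0 + s) 0 (1 - s) = 0" using IH2 N_def by simp
    ultimately show ?thesis by simp
  qed
  have Dc: "D3 N t a b c = D3 N t 0 0 1" if abc: "a + b + c = 1" for a b c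
  proof -
    have ad: "a + (b + c) = 1" using abc by (simp add: add.assoc)
    have "D3 N t a b c = D3 N t a 0 (b + c)"
      using deriv_zero_eq[OF dy[OF ad], of b 0] by simp
    also have "1 - a = b + c" using ad by (subst diff_eq_eq) (simp add: add_ac)
    hence "D3 N t a 0 (b + c) = D3 N t 0 0 1"
      using deriv_zero_eq[OF dx, of a 0] by simp
    finally show ?thesis .
  qed
  define c where "c = D3 N t 0 0 1"
  have Dc': "D3 N t a b d = c" if "a + b + d = 1" for a b d using Dc[OF that] unfolding c_def .
  have t0: "t \<noteq> 0" using avoid_ne[OF av, of 0] by simp
  have "c = 0"
  proof (cases "t = -1")
    case False
    have av': "avoid (Suc N) (t + 1)"
      unfolding avoid_def
    proof (intro allI impI)
      fix j assume j: "j \<le> Suc N"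
      show "t + 1 \<noteq> of_nat j"
      proof (cases j)
        case 0 then show ?thesis using False eq_neg_iff_add_eq_0[of t 1] by auto
      next
        case (Suc i)
        hence "i \<le> N" using j by simp
        hence "t \<noteq> of_nat i" using av unfolding avoid_def by blast
        thus ?thesis using Suc by simp
      qed
    qed
    have N1: "Suc N \<ge> 2" using N by simp
    have d: "((\<lambda>s. D3 (Suc N) (t + 1) (0 + s) 0 (1 - s)) has_field_derivative (- t * c)) (at s)" for s
    proof -
      have "((\<lambda>s. D3 (Suc N) (t + 1) (0 + s) 0 (1 - s)) has_field_derivative
          (- (t + 1 - 1) * D3 (Suc N - 1) (t + 1 - 1) (0 + s) 0 (1 - s))) (at s)"
        by (rule D3_d1[OF N1 av'])
      moreover have "D3 (Suc N - 1) (t + 1 - 1) (0 + s) 0 (1 - s) = c" using Dc'[of "0 + s" 0 "1 - s"] by simp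
      ultimately show ?thesis by simp
    qed
    have "(\<lambda>s. D3 (Suc N) (t + 1) (0 + s) 0 (1 - s)) 1 - (\<lambda>s. D3 (Suc N) (t + 1) (0 + s) 0 (1 - s)) 0 = (- t * c) * (1 - 0)"
      by (rule deriv_const_diff[OF d])
    moreover have "D3 (Suc N) (t + 1) 1 0 0 - D3 (Suc N) (t + 1) 0 0 1 = 0"
      by (rule D3_E1[OF N1 av'])
    ultimately have "t * c = 0" by simp
    thus ?thesis using t0 by simp
  next
    case True
    have av': "avoid (Suc N) t"
      unfolding avoid_def
    proof (intro allI impI)
      fix j :: nat
      show "t \<noteq> of_nat j"
      proof
        assume "t = of_nat j"
        hence "Re t = of_nat j" by simp
        thus False using True by simp
      qed
    qed
    have N1: "Suc N \<ge> 2" using N by simp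
    have d: "((\<lambda>s. D3 (Suc N) t 0 (0 + s) (1 - s)) has_field_derivative ((of_nat N - t) * c)) (at s)" for s
    proof -
      have "((\<lambda>s. D3 (Suc N) t 0 (0 + s) (1 - s)) has_field_derivative
          ((of_nat (Suc N) - 1 - t) * D3 (Suc N - 1) t 0 (0 + s) (1 - s))) (at s)"
        by (rule D3_d2[OF N1 av'])
      moreover have "D3 (Suc N - 1) t 0 (0 + s) (1 - s) = c" using Dc'[of 0 "0 + s" "1 - s"] by simp
      ultimately show ?thesis by simp
    qed
    have "(\<lambda>s. D3 (Suc N) t 0 (0 + s) (1 - s)) 1 - (\<lambda>s. D3 (Suc N) t 0 (0 + s) (1 - s)) 0 = ((of_nat N - t) * c) * (1 - 0)"
      by (rule deriv_const_diff[OF d])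
    moreover have "D3 (Suc N) t 0 1 0 - D3 (Suc N) t 0 0 1 = 0"
      by (rule D3_E2[OF N1 av'])
    ultimately have "(of_nat N - t) * c = 0" by simp
    moreover have "of_nat N - t \<noteq> 0"
    proof -
      have e: "of_nat N - t = (of_nat (Suc N) :: complex)" using True by simp
      show ?thesis unfolding e by (rule of_nat_neq_0)
    qed
    ultimately show ?thesis by simp
  qed
  thus ?case using Dc'[OF sxyz] N_def by simp
qed

lemma sum_from1: "f 0 = 0 \<Longrightarrow> (\<Sum>k=1..(n::nat). f k) = (\<Sum>k\<le>n. (f k :: complex))"
proof -
  assume f0: "f 0 = 0"
  have "(\<Sum>k\<le>n. f k) = (\<Sum>k=0..n. f k)" by (simp add: atLeast0AtMost)
  also have "\<dots> = f 0 + (\<Sum>k=Suc 0..n. f k)" by (rule sum.atLeast_Suc_atMost) simp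
  finally show ?thesis using f0 by simp
qed

lemma lessThan_conv: "(n::nat) \<ge> 1 \<Longrightarrow> {..<n} = {..n - 1}"
  by (cases n) (auto simp: lessThan_Suc_atMost)

lemma stmt1:
  assumes n: "n > 0" and s: "x + y + z = 1" and av: "\<forall>j::nat. j \<le> n \<longrightarrow> t \<noteq> of_nat j"
  shows "(-1) ^ n / 2 * (\<Sum>k<n. (t gchoose k) * eulerpoly k x * eulerpoly (n - 1 - k) y)
     = 1 / (of_nat n - t) * (\<Sum>k\<le>n. ((of_nat n - t) gchoose k) * bernpoly k x * eulerpoly (n - k) z)
       + (t gchoose n) * (\<Sum>k\<le>n. of_nat (n choose k) * eulerpoly k z / (t - of_nat k) * bernpoly (n - k) y)"
proof -
  have n1: "1 \<le> n" using n by simp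
  have a: "(-1) ^ n / 2 * (\<Sum>k<n. (t gchoose k) * eulerpoly k x * eulerpoly (n - 1 - k) y)
      = conv eulerpoly eulerpoly (L1c n t) (n - 1) x y"
    using n unfolding conv_def L1c_def lessThan_conv[OF n1] by (simp add: sum_distrib_left mult_ac)
  have b: "1 / (of_nat n - t) * (\<Sum>k\<le>n. ((of_nat n - t) gchoose k) * bernpoly k x * eulerpoly (n - k) z)
      = conv bernpoly eulerpoly (F1c n t) n x z"
    unfolding conv_def F1c_def by (simp add: sum_distrib_left mult_ac)
  have c: "(t gchoose n) * (\<Sum>k\<le>n. of_nat (n choose k) * eulerpoly k z / (t - of_nat k) * bernpoly (n - k) y)
      = conv eulerpoly bernpoly (G1c n t) n z y"
    unfolding conv_def G1c_def by (simp add: sum_distrib_left mult_ac)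
  have "D1 n t x y z = 0" using D1_zero[of n t x y z] n s av unfolding avoid_def by simp
  hence "conv eulerpoly eulerpoly (L1c n t) (n - 1) x y
      - (conv bernpoly eulerpoly (F1c n t) n x z + conv eulerpoly bernpoly (G1c n t) n z y) = 0"
    unfolding D1_def diff_diff_eq .
  hence "conv eulerpoly eulerpoly (L1c n t) (n - 1) x y
      = conv bernpoly eulerpoly (F1c n t) n x z + conv eulerpoly bernpoly (G1c n t) n z y"
    by (metis eq_iff_diff_eq_0)
  thus ?thesis unfolding a b c .
qed

lemma stmt2:
  assumes n: "n > 0" and s: "x + y + z = 1" and av: "\<forall>j::nat. j \<le> n \<longrightarrow> t \<noteq> of_nat j"
  shows "of_nat n / 2 * (t gchoose n) * (\<Sum>k<n. of_nat ((n - 1) choose k) * eulerpoly k x / (t - of_nat k) * eulerpoly (n - 1 - k) y)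
     - (-1) ^ n * eulerpoly n z * (t gchoose n) * (\<Sum>k<n. 1 / (t - of_nat k))
   = (-1) ^ n * (\<Sum>k=1..n. (t gchoose (n - k)) * bernpoly k y / of_nat k * eulerpoly (n - k) z)
     - (\<Sum>k=1..n. ((of_nat n - 1 - t) gchoose (n - k)) * bernpoly k x / of_nat k * eulerpoly (n - k) z)"
proof -
  have n1: "1 \<le> n" using n by simp
  have a: "of_nat n / 2 * (t gchoose n) * (\<Sum>k<n. of_nat ((n - 1) choose k) * eulerpoly k x / (t - of_nat k) * eulerpoly (n - 1 - k) y)
      = conv eulerpoly eulerpoly (A2c n t) (n - 1) x y"
    using n unfolding conv_def A2c_def lessThan_conv[OF n1] by (simp add: sum_distrib_left mult_ac)
  have h: "(-1) ^ n * eulerpoly n z * (t gchoose n) * (\<Sum>k<n. 1 / (t - of_nat k)) = Hc2 n t * eulerpoly n z"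
    unfolding Hc2_def by (simp add: mult_ac)
  have b: "(-1) ^ n * (\<Sum>k=1..n. (t gchoose (n - k)) * bernpoly k y / of_nat k * eulerpoly (n - k) z)
      = conv bernpoly eulerpoly (R21c n t) n y z"
    unfolding conv_def R21c_def by (subst sum_from1) (simp_all add: sum_distrib_left mult_ac)
  have c: "(\<Sum>k=1..n. ((of_nat n - 1 - t) gchoose (n - k)) * bernpoly k x / of_nat k * eulerpoly (n - k) z)
      = conv bernpoly eulerpoly (R22c n t) n x z"
    unfolding conv_def R22c_def by (subst sum_from1) (simp_all add: mult_ac)
  have "D2 n t x y z = 0" using D2_zero[of n t x y z] n s av unfolding avoid_def by simp
  thus ?thesis unfolding a h b c D2_def by (simp add: algebra_simps)
qed

lemma stmt3:
  assumes n: "n > 0" and s: "x + y + z = 1" and av: "\<forall>j::nat. j \<le> n \<longrightarrow> t \<noteq> of_nat j"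
  shows "(-1) ^ (n - 1) / of_nat n * ((t - 1) gchoose (n - 1)) * (\<Sum>k\<le>n. of_nat (n choose k) * bernpoly k x / (t - of_nat k) * bernpoly (n - k) y)
     - bernpoly n z / of_nat n * ((t - 1) gchoose (n - 1)) * (\<Sum>k=1..<n. 1 / (t - of_nat k))
   = 1 / t * (\<Sum>k=1..n. (t gchoose (n - k)) * bernpoly k y / of_nat k * bernpoly (n - k) z)
     + (-1) ^ n / (of_nat n - t) * (\<Sum>k=1..n. ((of_nat n - t) gchoose (n - k)) * bernpoly k x / of_nat k * bernpoly (n - k) z)"
proof -
  have a: "(-1) ^ (n - 1) / of_nat n * ((t - 1) gchoose (n - 1)) * (\<Sum>k\<le>n. of_nat (n choose k) * bernpoly k x / (t - of_nat k) * bernpoly (n - k) y)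
      = conv bernpoly bernpoly (A3c n t) n x y"
    unfolding conv_def A3c_def by (simp add: sum_distrib_left mult_ac)
  have h: "bernpoly n z / of_nat n * ((t - 1) gchoose (n - 1)) * (\<Sum>k=1..<n. 1 / (t - of_nat k)) = Hc3 n t * bernpoly n z"
    unfolding Hc3_def by (simp add: mult_ac)
  have b: "1 / t * (\<Sum>k=1..n. (t gchoose (n - k)) * bernpoly k y / of_nat k * bernpoly (n - k) z)
      = conv bernpoly bernpoly (R31c n t) n y z"
    unfolding conv_def R31c_def by (subst sum_from1) (simp_all add: sum_distrib_left mult_ac)
  have c: "(-1) ^ n / (of_nat n - t) * (\<Sum>k=1..n. ((of_nat n - t) gchoose (n - k)) * bernpoly k x / of_nat k * bernpoly (n - k) z)
      = conv bernpoly bernpoly (R32c n t) n x z"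
    unfolding conv_def R32c_def by (subst sum_from1) (simp_all add: sum_distrib_left mult_ac)
  have "D3 n t x y z = 0" using D3_zero[of n t x y z] n s av unfolding avoid_def by simp
  thus ?thesis unfolding a h b c D3_def by (simp add: algebra_simps)
qed

theorem theorem1p3:
  fixes n :: nat and x y z t :: complex
  assumes "n > 0" and "x + y + z = 1" and "\<forall>j::nat. j \<le> n \<longrightarrow> t \<noteq> of_nat j"
  shows
  "((-1) ^ n / 2 * (\<Sum>k<n. (t gchoose k) * eulerpoly k x * eulerpoly (n - 1 - k) y)
     = 1 / (of_nat n - t) * (\<Sum>k\<le>n. ((of_nat n - t) gchoose k) * bernpoly k x * eulerpoly (n - k) z)
       + (t gchoose n) * (\<Sum>k\<le>n. of_nat (n choose k) * eulerpoly k z / (t - of_nat k) * bernpoly (n - k) y))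
   \<and>
   (of_nat n / 2 * (t gchoose n) * (\<Sum>k<n. of_nat ((n - 1) choose k) * eulerpoly k x / (t - of_nat k) * eulerpoly (n - 1 - k) y)
     - (-1) ^ n * eulerpoly n z * (t gchoose n) * (\<Sum>k<n. 1 / (t - of_nat k))
   = (-1) ^ n * (\<Sum>k=1..n. (t gchoose (n - k)) * bernpoly k y / of_nat k * eulerpoly (n - k) z)
     - (\<Sum>k=1..n. ((of_nat n - 1 - t) gchoose (n - k)) * bernpoly k x / of_nat k * eulerpoly (n - k) z))
   \<and>
   ((-1) ^ (n - 1) / of_nat n * ((t - 1) gchoose (n - 1)) * (\<Sum>k\<le>n. of_nat (n choose k) * bernpoly k x / (t - of_nat k) * bernpoly (n - k) y)
     - bernpoly n z / of_nat n * ((t - 1) gchoose (n - 1)) * (\<Sum>k=1..<n. 1 / (t - of_nat k))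
   = 1 / t * (\<Sum>k=1..n. (t gchoose (n - k)) * bernpoly k y / of_nat k * bernpoly (n - k) z)
     + (-1) ^ n / (of_nat n - t) * (\<Sum>k=1..n. ((of_nat n - t) gchoose (n - k)) * bernpoly k x / of_nat k * bernpoly (n - k) z))"
  using stmt1[OF assms] stmt2[OF assms] stmt3[OF assms] by blast


end
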